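(* Let $G_\bullet/\Gamma$ be a nilmanifold of length $d$ and let $r\le d$. Define $\tilde G_i=G_r$ for $i\le r$ and $\tilde G_i=G_i$ for $i\ge r$, and $\tilde\Gamma=G_r\cap\Gamma$. Let $\iota:G_r/(G_r\cap\Gamma)\to G/\Gamma$ be the inclusion $g(G_r\cap\Gamma)\mapsto g\Gamma$. Then $\bar h\mapsto\iota\circ\bar h$ is a bijection from $\mathrm{poly}(\mathscr F_\emptyset\to\tilde G_\bullet/\tilde\Gamma)$ onto the set of those $\bar f\in\mathrm{poly}(\mathscr F_\emptyset\to G_\bullet/\Gamma)$ which take values in $G_r\Gamma=\{g\Gamma:g\in G_r\}\subset G/\Gamma$.
   Context: $\mathscr F$ is the family of finite non-empty subsets of $\mathbb N=\{1,2,\dots\}$, $\mathscr F_\emptyset=\mathscr F\cup\{\emptyset\}$. A prefiltration $G_\bullet$ on a nilpotent Lie group $G$: Lie subgroups $G=G_0\supseteq G_1\supseteq\cdots$ with $[G_i,G_j]\subseteq G_{i+j}$ and $G_{d+1}=\{e\}$ ($d$ minimal = length); a filtration if also $G_0=G_1=G$; $G_{\bullet+1}$ is $i\mapsto G_{i+1}$. If $\Gamma<G$ is discrete cocompact and each $G_i\cap\Gamma$ is cocompact in $G_i$, $G_\bullet/\Gamma$ is a nilmanifold of length $d$. $g:\mathscr F_\emptyset\to G$ is in $\mathrm{poly}(\mathscr F_\emptyset\to G_\bullet)$ if either $G_0=\{e\}$ and $g\equiv e$, or for each $\beta\in\mathscr F_\emptyset$ there is $D_\beta g\in\mathrm{poly}(\mathscr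 F_\emptyset\to G_{\bullet+1})$ with $D_\beta g(\alpha)=g(\alpha)^{-1}g(\alpha\cup\beta)$ whenever $\alpha\cap\beta=\emptyset$; for a prefiltration $H_\bullet$ with discrete cocompact $\Lambda<H_0$, $\mathrm{poly}(\mathscr F_\emptyset\to H_\bullet/\Lambda)$ consists of the maps $\alpha\mapsto g(\alpha)\Lambda$ with $g\in\mathrm{poly}(\mathscr F_\emptyset\to H_\bullet)$. *)

theory Defs
  imports "HOL-Algebra.Coset" "HOL-Algebra.Generated_Groups" "HOL-Analysis.Analysis"
begin

definition grp_commutator :: "('a, 'b) monoid_scheme \<Rightarrow> 'a \<Rightarrow> 'a \<Rightarrow> 'a" where
  "grp_commutator G x y = x \<otimes>\<^bsub>G\<^esub> y \<otimes>\<^bsub>G\<^esub> inv\<^bsub>G\<^esub> x \<otimes>\<^bsub>G\<^esub> inv\<^bsub>G\<^esub> y"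

definition comm_subgroup :: "('a, 'b) monoid_scheme \<Rightarrow> 'a set \<Rightarrow> 'a set \<Rightarrow> 'a set" where
  "comm_subgroup G A B = generate G {grp_commutator G x y | x y. x \<in> A \<and> y \<in> B}"

fun lower_central :: "('a, 'b) monoid_scheme \<Rightarrow> nat \<Rightarrow> 'a set" where
  "lower_central G 0 = carrier G"
| "lower_central G (Suc n) = comm_subgroup G (carrier G) (lower_central G n)"

definition nilpotent_group :: "('a, 'b) monoid_scheme \<Rightarrow> bool" where
  "nilpotent_group G \<longleftrightarrow> group G \<and> (\<exists>n. lower_central G n = {\<one>\<^bsub>G\<^esub>})"

definition topological_group :: "('a, 'b) monoid_scheme \<Rightarrow> 'a topology \<Rightarrow> bool" where
  "topological_group G T \<longleftrightarrow> group G \<and> topspace T = carrier G \<and>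
     continuous_map (prod_topology T T) T (\<lambda>(x, y). x \<otimes>\<^bsub>G\<^esub> y) \<and>
     continuous_map T T (\<lambda>x. inv\<^bsub>G\<^esub> x)"

text \<open>A Lie group, via Gleason--Montgomery--Zippin: a topological group whose underlying
  space is a topological manifold (Hausdorff, second countable, locally Euclidean of some
  dimension n). Such a group carries a unique compatible Lie group structure.\<close>
definition lie_group :: "('a, 'b) monoid_scheme \<Rightarrow> 'a topology \<Rightarrow> bool" where
  "lie_group G T \<longleftrightarrow> topological_group G T \<and> Hausdorff_space T \<and> second_countable T \<and>
     (\<exists>n. \<forall>x \<in> topspace T. \<exists>U V. openin T U \<and> x \<in> U \<and> openin (Euclidean_space n) V \<and>
          subtopology T U homeomorphic_space subtopology (Euclidean_space n) V)"

definition discrete_in :: "'a topology \<Rightarrow> 'a set \<Rightarrow> bool" where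
  "discrete_in T S \<longleftrightarrow> (\<forall>x \<in> S. \<exists>U. openin T U \<and> U \<inter> S = {x})"

definition cocompact_in :: "('a, 'b) monoid_scheme \<Rightarrow> 'a topology \<Rightarrow> 'a set \<Rightarrow> 'a set \<Rightarrow> bool" where
  "cocompact_in G T H \<Lambda> \<longleftrightarrow> (\<exists>K. compactin T K \<and> K \<subseteq> H \<and> H = K <#>\<^bsub>G\<^esub> \<Lambda>)"

definition prefiltration :: "('a, 'b) monoid_scheme \<Rightarrow> (nat \<Rightarrow> 'a set) \<Rightarrow> nat \<Rightarrow> bool" where
  "prefiltration G Gs d \<longleftrightarrow> Gs 0 = carrier G \<and> (\<forall>i. subgroup (Gs i) G) \<and>
     (\<forall>i. Gs (Suc i) \<subseteq> Gs i) \<and>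
     (\<forall>i j. comm_subgroup G (Gs i) (Gs j) \<subseteq> Gs (i + j)) \<and>
     Gs (Suc d) = {\<one>\<^bsub>G\<^esub>} \<and> (\<forall>d'. Gs (Suc d') = {\<one>\<^bsub>G\<^esub>} \<longrightarrow> d \<le> d')"

definition nilmanifold ::
  "('a, 'b) monoid_scheme \<Rightarrow> 'a topology \<Rightarrow> (nat \<Rightarrow> 'a set) \<Rightarrow> 'a set \<Rightarrow> nat \<Rightarrow> bool" where
  "nilmanifold G T Gs \<Gamma> d \<longleftrightarrow> lie_group G T \<and> nilpotent_group G \<and> prefiltration G Gs d \<and>
     subgroup \<Gamma> G \<and> discrete_in T \<Gamma> \<and> cocompact_in G T (carrier G) \<Gamma> \<and>
     (\<forall>i. cocompact_in G T (Gs i) (Gs i \<inter> \<Gamma>))"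

definition FE :: "nat set set" where
  "FE = {\<alpha>. finite \<alpha> \<and> 0 \<notin> \<alpha>}"

text \<open>\<open>poly(\<F>\<^sub>\<emptyset> \<rightarrow> G\<^sub>\<bullet>)\<close>, the maps \<open>\<F>\<^sub>\<emptyset> \<rightarrow> G\<^sub>0\<close> (only values on \<open>\<F>\<^sub>\<emptyset>\<close> matter).\<close>
inductive poly_map :: "('a, 'b) monoid_scheme \<Rightarrow> (nat \<Rightarrow> 'a set) \<Rightarrow> (nat set \<Rightarrow> 'a) \<Rightarrow> bool"
  for G where
  triv: "Gs 0 = {\<one>\<^bsub>G\<^esub>} \<Longrightarrow> (\<forall>\<alpha>\<in>FE. g \<alpha> = \<one>\<^bsub>G\<^esub>) \<Longrightarrow> poly_map G Gs g"
| step: "(\<forall>\<alpha>\<in>FE. g \<alpha> \<in> Gs 0) \<Longrightarrow>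
         (\<forall>\<beta>\<in>FE. \<exists>Dg. poly_map G (\<lambda>i. Gs (Suc i)) Dg \<and>
             (\<forall>\<alpha>\<in>FE. \<alpha> \<inter> \<beta> = {} \<longrightarrow> Dg \<alpha> = inv\<^bsub>G\<^esub> (g \<alpha>) \<otimes>\<^bsub>G\<^esub> g (\<alpha> \<union> \<beta>))) \<Longrightarrow>
         poly_map G Gs g"

definition poly_quot ::
  "('a, 'b) monoid_scheme \<Rightarrow> (nat \<Rightarrow> 'a set) \<Rightarrow> 'a set \<Rightarrow> (nat set \<Rightarrow> 'a set) set" where
  "poly_quot G Gs \<Lambda> = {(\<lambda>\<alpha>\<in>FE. g \<alpha> <#\<^bsub>G\<^esub> \<Lambda>) | g. poly_map G Gs g}"

text \<open>The inclusion \<open>\<iota> : G\<^sub>r/(G\<^sub>r\<inter>\<Gamma>) \<rightarrow> G/\<Gamma>\<close>, \<open>g(G\<^sub>r\<inter>\<Gamma>) \<mapsto> g\<Gamma>\<close>, written as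
  \<open>C \<mapsto> C\<Gamma>\<close> (indeed \<open>g(G\<^sub>r\<inter>\<Gamma>)\<Gamma> = g\<Gamma>\<close>).\<close>
definition coset_incl :: "('a, 'b) monoid_scheme \<Rightarrow> 'a set \<Rightarrow> 'a set \<Rightarrow> 'a set" where
  "coset_incl G \<Gamma> C = C <#>\<^bsub>G\<^esub> \<Gamma>"

end

theory Submission
  imports Defs "HOL-Algebra.FiniteProduct"
begin

lemma FE_diff: "\<alpha> \<in> FE \<Longrightarrow> \<alpha> - \<beta> \<in> FE" by (auto simp: FE_def)
lemma FE_Un: "\<alpha> \<in> FE \<Longrightarrow> \<beta> \<in> FE \<Longrightarrow> \<alpha> \<union> \<beta> \<in> FE" by (auto simp: FE_def)
lemma FE_empty: "{} \<in> FE" by (auto simp: FE_def)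

definition Dm :: "('a,'b) monoid_scheme \<Rightarrow> nat set \<Rightarrow> (nat set \<Rightarrow> 'a) \<Rightarrow> nat set \<Rightarrow> 'a" where
  "Dm G \<beta> h \<alpha> = inv\<^bsub>G\<^esub> (h (\<alpha> - \<beta>)) \<otimes>\<^bsub>G\<^esub> h (\<alpha> \<union> \<beta>)"

fun Dl :: "('a,'b) monoid_scheme \<Rightarrow> nat set list \<Rightarrow> (nat set \<Rightarrow> 'a) \<Rightarrow> nat set \<Rightarrow> 'a" where
  "Dl G [] h = h"
| "Dl G (\<beta>#\<beta>s) h = Dl G \<beta>s (Dm G \<beta> h)"

definition Pn :: "('a,'b) monoid_scheme \<Rightarrow> (nat \<Rightarrow> 'a set) \<Rightarrow> nat \<Rightarrow> nat \<Rightarrow> (nat set \<Rightarrow> 'a) \<Rightarrow> bool" where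
  "Pn G Gs n k h \<longleftrightarrow> (\<forall>\<beta>s \<alpha>. length \<beta>s \<le> n \<longrightarrow> set \<beta>s \<subseteq> FE \<longrightarrow> \<alpha> \<in> FE \<longrightarrow>
      Dl G \<beta>s h \<alpha> \<in> Gs (k + length \<beta>s))"

lemma Pn_0: "Pn G Gs 0 k h \<longleftrightarrow> (\<forall>\<alpha>\<in>FE. h \<alpha> \<in> Gs k)"
  unfolding Pn_def by auto

lemma Pn_Suc: "Pn G Gs (Suc n) k h \<longleftrightarrow> (\<forall>\<alpha>\<in>FE. h \<alpha> \<in> Gs k) \<and> (\<forall>\<beta>\<in>FE. Pn G Gs n (Suc k) (Dm G \<beta> h))"
proof
  assume P: "Pn G Gs (Suc n) k h"
  have "\<forall>\<alpha>\<in>FE. h \<alpha> \<in> Gs k" using P[unfolded Pn_def, rule_format, of "[]"] by auto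
  moreover have "\<forall>\<beta>\<in>FE. Pn G Gs n (Suc k) (Dm G \<beta> h)"
    unfolding Pn_def proof (intro ballI allI impI)
    fix \<beta> \<beta>s \<alpha> assume "\<beta> \<in> FE" "length \<beta>s \<le> n" "set \<beta>s \<subseteq> FE" "\<alpha> \<in> FE"
    then show "Dl G \<beta>s (Dm G \<beta> h) \<alpha> \<in> Gs (Suc k + length \<beta>s)"
      using P[unfolded Pn_def, rule_format, of "\<beta>#\<beta>s" \<alpha>] by auto
  qed
  ultimately show "(\<forall>\<alpha>\<in>FE. h \<alpha> \<in> Gs k) \<and> (\<forall>\<beta>\<in>FE. Pn G Gs n (Suc k) (Dm G \<beta> h))" by blast
next
  assume A: "(\<forall>\<alpha>\<in>FE. h \<alpha> \<in> Gs k) \<and> (\<forall>\<beta>\<in>FE. Pn G Gs n (Suc k) (Dm G \<beta> h))"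
  show "Pn G Gs (Suc n) k h"
    unfolding Pn_def proof (intro allI impI)
    fix \<beta>s \<alpha> assume "length \<beta>s \<le> Suc n" "set \<beta>s \<subseteq> FE" "\<alpha> \<in> FE"
    then show "Dl G \<beta>s h \<alpha> \<in> Gs (k + length \<beta>s)"
    proof (cases \<beta>s)
      case Nil then show ?thesis using A \<open>\<alpha> \<in> FE\<close> by auto
    next
      case (Cons \<beta> bs)
      have b: "\<beta> \<in> FE" "set bs \<subseteq> FE" "length bs \<le> n" using Cons \<open>length \<beta>s \<le> Suc n\<close> \<open>set \<beta>s \<subseteq> FE\<close> by auto
      have "Pn G Gs n (Suc k) (Dm G \<beta> h)" using A b(1) by blast
      then have "Dl G bs (Dm G \<beta> h) \<alpha> \<in> Gs (Suc k + length bs)"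
        unfolding Pn_def using b(2,3) \<open>\<alpha> \<in> FE\<close> by blast
      then show ?thesis using Cons by simp
    qed
  qed
qed

lemma Pn_shift: "Pn G Gs n (Suc k) h = Pn G (\<lambda>i. Gs (Suc i)) n k h"
  unfolding Pn_def by simp

lemma Dm_cong: "\<beta> \<in> FE \<Longrightarrow> (\<And>x. x \<in> FE \<Longrightarrow> h x = h' x) \<Longrightarrow> x \<in> FE \<Longrightarrow> Dm G \<beta> h x = Dm G \<beta> h' x"
  unfolding Dm_def by (simp add: FE_diff FE_Un)

lemma Dl_cong: "set \<beta>s \<subseteq> FE \<Longrightarrow> (\<And>x. x \<in> FE \<Longrightarrow> h x = h' x) \<Longrightarrow> \<alpha> \<in> FE \<Longrightarrow> Dl G \<beta>s h \<alpha> = Dl G \<beta>s h' \<alpha>"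
proof (induction \<beta>s arbitrary: h h')
  case Nil then show ?case by simp
next
  case (Cons \<beta> \<beta>s)
  have e: "\<And>x. x \<in> FE \<Longrightarrow> Dm G \<beta> h x = Dm G \<beta> h' x" using Cons.prems by (intro Dm_cong) auto
  have "Dl G \<beta>s (Dm G \<beta> h) \<alpha> = Dl G \<beta>s (Dm G \<beta> h') \<alpha>"
    using Cons.prems by (intro Cons.IH e) auto
  then show ?case by simp
qed

lemma Pn_cong: "(\<And>x. x \<in> FE \<Longrightarrow> h x = h' x) \<Longrightarrow> Pn G Gs n k h = Pn G Gs n k h'"
proof -
  assume e: "\<And>x. x \<in> FE \<Longrightarrow> h x = h' x"
  have "Dl G \<beta>s h \<alpha> = Dl G \<beta>s h' \<alpha>" if "set \<beta>s \<subseteq> FE" "\<alpha> \<in> FE" for \<beta>s \<alpha>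
    by (rule Dl_cong[OF that(1) e that(2)])
  then show ?thesis unfolding Pn_def by auto
qed

lemma Pn_congI: assumes "Pn G Gs n k h'" "\<And>x. x \<in> FE \<Longrightarrow> h x = h' x" shows "Pn G Gs n k h"
proof -
  have "Pn G Gs n k h = Pn G Gs n k h'" by (rule Pn_cong) (rule assms(2))
  then show ?thesis using assms(1) by simp
qed

lemma Pn_mono_n: "Pn G Gs n k h \<Longrightarrow> m \<le> n \<Longrightarrow> Pn G Gs m k h"
  unfolding Pn_def by auto

lemma Dm_rm: "Dm G \<beta>' (\<lambda>\<alpha>. h (\<alpha> - \<beta>)) = (\<lambda>\<alpha>. Dm G (\<beta>' - \<beta>) h (\<alpha> - \<beta>))"
proof
  fix \<alpha>
  have 1: "\<alpha> - \<beta>' - \<beta> = \<alpha> - \<beta> - (\<beta>' - \<beta>)" by blast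
  have 2: "(\<alpha> \<union> \<beta>') - \<beta> = (\<alpha> - \<beta>) \<union> (\<beta>' - \<beta>)" by blast
  show "Dm G \<beta>' (\<lambda>\<alpha>. h (\<alpha> - \<beta>)) \<alpha> = Dm G (\<beta>' - \<beta>) h (\<alpha> - \<beta>)"
    unfolding Dm_def 1 2 ..
qed

lemma Pn_rm: "Pn G Gs n k h \<Longrightarrow> Pn G Gs n k (\<lambda>\<alpha>. h (\<alpha> - \<beta>))"
proof (induction n arbitrary: k h)
  case 0 then show ?case by (auto simp: Pn_0 FE_diff)
next
  case (Suc n)
  show ?case unfolding Pn_Suc Dm_rm
  proof (intro conjI ballI)
    fix \<alpha> assume "\<alpha> \<in> FE" then show "h (\<alpha> - \<beta>) \<in> Gs k" using Suc.prems by (auto simp: Pn_Suc FE_diff)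
  next
    fix \<beta>' assume "\<beta>' \<in> FE"
    then have "\<beta>' - \<beta> \<in> FE" by (rule FE_diff)
    then have "Pn G Gs n (Suc k) (Dm G (\<beta>' - \<beta>) h)" using Suc.prems by (auto simp: Pn_Suc)
    then show "Pn G Gs n (Suc k) (\<lambda>\<alpha>. Dm G (\<beta>' - \<beta>) h (\<alpha> - \<beta>))" by (rule Suc.IH)
  qed
qed

lemma Dl_subgroup:
  assumes "subgroup K G" "group G" "set \<beta>s \<subseteq> FE" "\<alpha> \<in> FE" "\<And>x. x \<in> FE \<Longrightarrow> h x \<in> K"
  shows "Dl G \<beta>s h \<alpha> \<in> K"
  using assms(3-5)
proof (induction \<beta>s arbitrary: h)
  case Nil then show ?case by simp
next
  case (Cons \<beta> \<beta>s)
  have "\<And>x. x \<in> FE \<Longrightarrow> Dm G \<beta> h x \<in> K"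
    unfolding Dm_def using Cons.prems assms(1)
    by (auto intro!: subgroup.m_closed subgroup.m_inv_closed simp: FE_diff FE_Un)
  then show ?case using Cons by simp
qed

lemma Dl_one: "group G \<Longrightarrow> Dl G \<beta>s (\<lambda>_. \<one>\<^bsub>G\<^esub>) = (\<lambda>_. \<one>\<^bsub>G\<^esub>)"
proof (induction \<beta>s)
  case Nil then show ?case by simp
next
  case (Cons \<beta> \<beta>s)
  have "Dm G \<beta> (\<lambda>_. \<one>\<^bsub>G\<^esub>) = (\<lambda>_. \<one>\<^bsub>G\<^esub>)" unfolding Dm_def using Cons.prems
    by (simp add: monoid.inv_one monoid.l_one group.is_monoid)
  then show ?case using Cons by simp
qed

lemma Pn_one: "group G \<Longrightarrow> (\<And>i. \<one>\<^bsub>G\<^esub> \<in> Gs i) \<Longrightarrow> Pn G Gs n k (\<lambda>_. \<one>\<^bsub>G\<^esub>)"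
  unfolding Pn_def by (simp add: Dl_one)

definition cm :: "('a,'b) monoid_scheme \<Rightarrow> 'a \<Rightarrow> 'a \<Rightarrow> 'a" where
  "cm G a b = inv\<^bsub>G\<^esub> a \<otimes>\<^bsub>G\<^esub> inv\<^bsub>G\<^esub> b \<otimes>\<^bsub>G\<^esub> a \<otimes>\<^bsub>G\<^esub> b"

definition mulf :: "('a,'b) monoid_scheme \<Rightarrow> ('c \<Rightarrow> 'a) \<Rightarrow> ('c \<Rightarrow> 'a) \<Rightarrow> 'c \<Rightarrow> 'a" where
  "mulf G f g = (\<lambda>x. f x \<otimes>\<^bsub>G\<^esub> g x)"

definition cmf :: "('a,'b) monoid_scheme \<Rightarrow> ('c \<Rightarrow> 'a) \<Rightarrow> ('c \<Rightarrow> 'a) \<Rightarrow> 'c \<Rightarrow> 'a" where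
  "cmf G f g = (\<lambda>x. cm G (f x) (g x))"

context group begin
lemma canc1: "x \<in> carrier G \<Longrightarrow> z \<in> carrier G \<Longrightarrow> x \<otimes> (inv x \<otimes> z) = z"
  by (simp add: m_assoc [symmetric])
lemma canc2: "x \<in> carrier G \<Longrightarrow> z \<in> carrier G \<Longrightarrow> inv x \<otimes> (x \<otimes> z) = z"
  by (simp add: m_assoc [symmetric])
lemma id_mul:
  assumes "x \<in> carrier G" "y \<in> carrier G" "u \<in> carrier G" "v \<in> carrier G"
  shows "inv (x \<otimes> y) \<otimes> (u \<otimes> v) =
    ((inv x \<otimes> u) \<otimes> cm G (inv x \<otimes> u) y) \<otimes> (inv y \<otimes> v)"
  using assms by (simp add: cm_def m_assoc inv_mult_group canc1 canc2)
lemma id_comm: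
  assumes "x \<in> carrier G" "y \<in> carrier G" "F \<in> carrier G" "H \<in> carrier G"
  shows "inv (cm G x y) \<otimes> cm G (x \<otimes> F) (y \<otimes> H) =
    (((cm G x H \<otimes> cm G (cm G x H) F) \<otimes> cm G F H) \<otimes> cm G ((cm G x H \<otimes> cm G (cm G x H) F) \<otimes> cm G F H) (cm G x y)
      \<otimes> cm G (cm G x y) H) \<otimes> ((cm G (cm G x y) F \<otimes> cm G (cm G (cm G x y) F) H) \<otimes> (cm G F y \<otimes> cm G (cm G F y) H))"
  using assms by (simp add: cm_def m_assoc inv_mult_group canc1 canc2)
end

locale pfil = group G for G :: "('a,'b) monoid_scheme" (structure) +
  fixes Gs :: "nat \<Rightarrow> 'a set"
  assumes Gs_sub: "subgroup (Gs i) G" and Gs_dec: "Gs (Suc i) \<subseteq> Gs i"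
    and Gs_comm: "x \<in> Gs i \<Longrightarrow> y \<in> Gs j \<Longrightarrow> cm G x y \<in> Gs (i+j)"
begin

lemma Gs_mono: "i \<le> j \<Longrightarrow> Gs j \<subseteq> Gs i"
proof (induction j rule: dec_induct)
  case base then show ?case by simp
next
  case (step j) show ?case by (rule subset_trans[OF Gs_dec step.IH])
qed

lemma Gs_carr: "Gs i \<subseteq> carrier G" using subgroup.subset[OF Gs_sub] .
lemma Gs_one: "\<one> \<in> Gs i" using subgroup.one_closed[OF Gs_sub] .
lemma Gs_mult: "x \<in> Gs i \<Longrightarrow> y \<in> Gs i \<Longrightarrow> x \<otimes> y \<in> Gs i" using subgroup.m_closed[OF Gs_sub] .
lemma Gs_inv: "x \<in> Gs i \<Longrightarrow> inv x \<in> Gs i" using subgroup.m_inv_closed[OF Gs_sub] .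

lemma P_carr: "Pn G Gs n k h \<Longrightarrow> \<alpha> \<in> FE \<Longrightarrow> h \<alpha> \<in> carrier G"
  using Pn_mono_n[of G Gs n k h 0] Gs_carr by (auto simp: Pn_0)

lemma P_val: "Pn G Gs n k h \<Longrightarrow> \<alpha> \<in> FE \<Longrightarrow> h \<alpha> \<in> Gs k"
  using Pn_mono_n[of G Gs n k h 0] by (auto simp: Pn_0)

lemma P_mono_k: "Pn G Gs n k h \<Longrightarrow> k' \<le> k \<Longrightarrow> Pn G Gs n k' h"
  unfolding Pn_def
proof (intro allI impI)
  fix \<beta>s \<alpha> assume P: "\<forall>\<beta>s \<alpha>. length \<beta>s \<le> n \<longrightarrow> set \<beta>s \<subseteq> FE \<longrightarrow> \<alpha> \<in> FE \<longrightarrow> Dl G \<beta>s h \<alpha> \<in> Gs (k + length \<beta>s)"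
    and k: "k' \<le> k" and b: "length \<beta>s \<le> n" "set \<beta>s \<subseteq> FE" "\<alpha> \<in> FE"
  have "Dl G \<beta>s h \<alpha> \<in> Gs (k + length \<beta>s)" using P b by blast
  moreover have "Gs (k + length \<beta>s) \<subseteq> Gs (k' + length \<beta>s)" using k by (intro Gs_mono) simp
  ultimately show "Dl G \<beta>s h \<alpha> \<in> Gs (k' + length \<beta>s)" by (rule subsetD[rotated])
qed

lemma AC: "(\<forall>k f g. Pn G Gs n k f \<longrightarrow> Pn G Gs n k g \<longrightarrow> Pn G Gs n k (mulf G f g)) \<and>
  (\<forall>i j f g. Pn G Gs n i f \<longrightarrow> Pn G Gs n j g \<longrightarrow> Pn G Gs n (i+j) (cmf G f g))"
proof (induction n)
  case 0 show ?case by (auto simp: Pn_0 mulf_def cmf_def intro: Gs_mult Gs_comm)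
next
  case (Suc n)
  have A: "\<And>k f g. Pn G Gs n k f \<Longrightarrow> Pn G Gs n k g \<Longrightarrow> Pn G Gs n k (mulf G f g)" using Suc.IH by blast
  have C: "\<And>i j f g. Pn G Gs n i f \<Longrightarrow> Pn G Gs n j g \<Longrightarrow> Pn G Gs n (i+j) (cmf G f g)" using Suc.IH by blast
  have Cm: "Pn G Gs n m (cmf G f g)" if "Pn G Gs n i f" "Pn G Gs n j g" "m \<le> i + j" for i j m f g
    by (rule P_mono_k[OF C[OF that(1,2)] that(3)])
  have CJ: "Pn G Gs n m (mulf G u (cmf G u v))" if u: "Pn G Gs n m u" and v: "Pn G Gs n l v" for m l u v
  proof -
    have "Pn G Gs n m (cmf G u v)" by (rule Cm[OF u v]) simp
    then show ?thesis by (rule A[OF u])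
  qed
  show ?case
  proof (intro conjI allI impI)
    fix k f g assume f: "Pn G Gs (Suc n) k f" and g: "Pn G Gs (Suc n) k g"
    show "Pn G Gs (Suc n) k (mulf G f g)"
      unfolding Pn_Suc
    proof (intro conjI ballI)
      fix \<alpha> assume "\<alpha> \<in> FE" then show "mulf G f g \<alpha> \<in> Gs k"
        using f g by (auto simp: Pn_Suc mulf_def intro: Gs_mult)
    next
      fix \<beta> assume \<beta>: "\<beta> \<in> FE"
      define F where "F = Dm G \<beta> f"
      define H where "H = Dm G \<beta> g"
      define ga where "ga = (\<lambda>\<alpha>. g (\<alpha> - \<beta>))"
      have F: "Pn G Gs n (Suc k) F" using f \<beta> by (simp add: Pn_Suc F_def)
      have H: "Pn G Gs n (Suc k) H" using g \<beta> by (simp add: Pn_Suc H_def)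
      have ga: "Pn G Gs n k ga" unfolding ga_def by (rule Pn_rm, rule Pn_mono_n[OF g]) simp
      have 1: "Pn G Gs n (Suc k) (cmf G F ga)" by (rule Cm[OF F ga]) simp
      have X: "Pn G Gs n (Suc k) (mulf G (mulf G F (cmf G F ga)) H)"
        by (rule A[OF A[OF F 1] H])
      have eq: "Dm G \<beta> (mulf G f g) x = mulf G (mulf G F (cmf G F ga)) H x" if x: "x \<in> FE" for x
      proof -
        have c: "f (x-\<beta>) \<in> carrier G" "g (x-\<beta>) \<in> carrier G" "f (x \<union> \<beta>) \<in> carrier G" "g (x \<union> \<beta>) \<in> carrier G"
          using P_carr[OF f] P_carr[OF g] x \<beta> FE_diff FE_Un by auto
        show ?thesis
          unfolding Dm_def mulf_def cmf_def F_def H_def ga_def by (rule id_mul[OF c])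
      qed
      show "Pn G Gs n (Suc k) (Dm G \<beta> (mulf G f g))" by (rule Pn_congI[OF X eq])
    qed
  next
    fix i j f g assume f: "Pn G Gs (Suc n) i f" and g: "Pn G Gs (Suc n) j g"
    show "Pn G Gs (Suc n) (i+j) (cmf G f g)"
      unfolding Pn_Suc
    proof (intro conjI ballI)
      fix \<alpha> assume "\<alpha> \<in> FE" then show "cmf G f g \<alpha> \<in> Gs (i+j)"
        using f g by (auto simp: Pn_Suc cmf_def intro: Gs_comm)
    next
      fix \<beta> assume \<beta>: "\<beta> \<in> FE"
      define F where "F = Dm G \<beta> f"
      define H where "H = Dm G \<beta> g"
      define fa where "fa = (\<lambda>\<alpha>. f (\<alpha> - \<beta>))"
      define ga where "ga = (\<lambda>\<alpha>. g (\<alpha> - \<beta>))"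
      define z where "z = cmf G fa ga"
      define W where "W = mulf G (mulf G (cmf G fa H) (cmf G (cmf G fa H) F)) (cmf G F H)"
      define X where "X = mulf G (mulf G (mulf G W (cmf G W z)) (cmf G z H))
          (mulf G (mulf G (cmf G z F) (cmf G (cmf G z F) H)) (mulf G (cmf G F ga) (cmf G (cmf G F ga) H)))"
      have F: "Pn G Gs n (Suc i) F" using f \<beta> by (simp add: Pn_Suc F_def)
      have H: "Pn G Gs n (Suc j) H" using g \<beta> by (simp add: Pn_Suc H_def)
      have fa: "Pn G Gs n i fa" unfolding fa_def by (rule Pn_rm, rule Pn_mono_n[OF f]) simp
      have ga: "Pn G Gs n j ga" unfolding ga_def by (rule Pn_rm, rule Pn_mono_n[OF g]) simp
      have z: "Pn G Gs n (i+j) z" unfolding z_def by (rule C[OF fa ga])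
      have 1: "Pn G Gs n (Suc (i+j)) (cmf G fa H)" by (rule Cm[OF fa H]) simp
      have 2: "Pn G Gs n (Suc (i+j)) (cmf G F H)" by (rule Cm[OF F H]) simp
      have W: "Pn G Gs n (Suc (i+j)) W" unfolding W_def
        by (rule A[OF CJ[OF 1 F] 2])
      have 3: "Pn G Gs n (Suc (i+j)) (cmf G z H)" by (rule Cm[OF z H]) simp
      have 4: "Pn G Gs n (Suc (i+j)) (cmf G z F)" by (rule Cm[OF z F]) simp
      have 5: "Pn G Gs n (Suc (i+j)) (cmf G F ga)" by (rule Cm[OF F ga]) simp
      have X: "Pn G Gs n (Suc (i+j)) X" unfolding X_def
        by (rule A[OF A[OF CJ[OF W z] 3] A[OF CJ[OF 4 H] CJ[OF 5 H]]])
      have eq: "Dm G \<beta> (cmf G f g) x = X x" if x: "x \<in> FE" for x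
      proof -
        have c: "f (x-\<beta>) \<in> carrier G" "g (x-\<beta>) \<in> carrier G" "f (x \<union> \<beta>) \<in> carrier G" "g (x \<union> \<beta>) \<in> carrier G"
          using P_carr[OF f] P_carr[OF g] x \<beta> FE_diff FE_Un by auto
        note e = id_comm[OF c(1) c(2) m_closed[OF inv_closed[OF c(1)] c(3)] m_closed[OF inv_closed[OF c(2)] c(4)]]
        show ?thesis
          using e[unfolded canc1[OF c(1) c(3)] canc1[OF c(2) c(4)]]
          unfolding Dm_def mulf_def cmf_def F_def H_def fa_def ga_def X_def W_def z_def .
      qed
      show "Pn G Gs n (Suc (i+j)) (Dm G \<beta> (cmf G f g))" by (rule Pn_congI[OF X eq])
    qed
  qed
qed

lemma P_mul: "Pn G Gs n k f \<Longrightarrow> Pn G Gs n k g \<Longrightarrow> Pn G Gs n k (mulf G f g)"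
  using AC[of n] by auto

lemma P_one: "Pn G Gs n k (\<lambda>_. \<one>)"
  by (rule Pn_one[OF is_group Gs_one])

definition mono :: "nat set \<Rightarrow> 'a \<Rightarrow> nat set \<Rightarrow> 'a" where
  "mono \<beta> c = (\<lambda>\<alpha>. if \<beta> \<subseteq> \<alpha> then c else \<one>)"

lemma Dm_mono: assumes "c \<in> carrier G"
  shows "Dm G \<beta>' (mono \<beta> c) = (if \<beta> \<inter> \<beta>' = {} then (\<lambda>_. \<one>) else mono (\<beta> - \<beta>') c)"
proof (cases "\<beta> \<inter> \<beta>' = {}")
  case True
  have "Dm G \<beta>' (mono \<beta> c) \<alpha> = \<one>" for \<alpha>
  proof -
    have 1: "(\<beta> \<subseteq> \<alpha> - \<beta>') = (\<beta> \<subseteq> \<alpha> \<union> \<beta>')" using True by blast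
    show ?thesis unfolding Dm_def mono_def 1 using assms by simp
  qed
  then show ?thesis using True by auto
next
  case False
  have "Dm G \<beta>' (mono \<beta> c) \<alpha> = mono (\<beta> - \<beta>') c \<alpha>" for \<alpha>
  proof -
    have 1: "\<not> (\<beta> \<subseteq> \<alpha> - \<beta>')" using False by blast
    have 2: "(\<beta> \<subseteq> \<alpha> \<union> \<beta>') = (\<beta> - \<beta>' \<subseteq> \<alpha>)" by blast
    show ?thesis unfolding Dm_def mono_def 2 using 1 assms by simp
  qed
  then show ?thesis using False by auto
qed

lemma P_mono: "finite \<beta> \<Longrightarrow> c \<in> Gs (k + card \<beta>) \<Longrightarrow> Pn G Gs n k (mono \<beta> c)"
proof (induction n arbitrary: \<beta> k)
  case 0
  have "c \<in> Gs k" using 0 Gs_mono[of k "k + card \<beta>"] by auto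
  then show ?case by (auto simp: Pn_0 mono_def Gs_one)
next
  case (Suc n)
  have ck: "c \<in> Gs k" using Suc.prems Gs_mono[of k "k + card \<beta>"] by auto
  have cc: "c \<in> carrier G" using ck Gs_carr by auto
  show ?case unfolding Pn_Suc
  proof (intro conjI ballI)
    fix \<alpha> show "mono \<beta> c \<alpha> \<in> Gs k" using ck by (auto simp: mono_def Gs_one)
  next
    fix \<beta>' assume "\<beta>' \<in> FE"
    show "Pn G Gs n (Suc k) (Dm G \<beta>' (mono \<beta> c))"
    proof (cases "\<beta> \<inter> \<beta>' = {}")
      case True then show ?thesis using Dm_mono[OF cc] P_one by simp
    next
      case False
      have "card (\<beta> - \<beta>') < card \<beta>" using False Suc.prems(1)
        by (metis Diff_disjoint Diff_subset Int_Diff_disjoint inf.absorb_iff2 inf_commute psubsetI psubset_card_mono)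
      then have "c \<in> Gs (Suc k + card (\<beta> - \<beta>'))" using Suc.prems(2) Gs_mono[of "Suc k + card (\<beta> - \<beta>')" "k + card \<beta>"] by auto
      then have "Pn G Gs n (Suc k) (mono (\<beta> - \<beta>') c)" using Suc.prems(1) by (intro Suc.IH) auto
      then show ?thesis using Dm_mono[OF cc] False by simp
    qed
  qed
qed

definition prodl :: "(nat set \<Rightarrow> 'a) list \<Rightarrow> nat set \<Rightarrow> 'a" where
  "prodl fs = (\<lambda>\<alpha>. foldr (\<lambda>f acc. f \<alpha> \<otimes> acc) fs \<one>)"

lemma P_prodl: "(\<And>f. f \<in> set fs \<Longrightarrow> Pn G Gs n k f) \<Longrightarrow> Pn G Gs n k (prodl fs)"
proof (induction fs)
  case Nil then show ?case by (simp add: prodl_def P_one)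
next
  case (Cons f fs)
  have "prodl (f # fs) = mulf G f (prodl fs)" by (simp add: prodl_def mulf_def)
  then show ?case using Cons P_mul by simp
qed

end

lemma Dl_local: "set \<beta>s \<subseteq> Pow U \<Longrightarrow> \<alpha> \<subseteq> U \<Longrightarrow> (\<And>y. y \<subseteq> U \<Longrightarrow> h y = h' y) \<Longrightarrow> Dl G \<beta>s h \<alpha> = Dl G \<beta>s h' \<alpha>"
proof (induction \<beta>s arbitrary: h h')
  case Nil then show ?case by simp
next
  case (Cons \<beta> \<beta>s)
  have e: "\<And>y. y \<subseteq> U \<Longrightarrow> Dm G \<beta> h y = Dm G \<beta> h' y"
  proof -
    fix y assume "y \<subseteq> U"
    then have "y - \<beta> \<subseteq> U" "y \<union> \<beta> \<subseteq> U" using Cons.prems by auto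
    then show "Dm G \<beta> h y = Dm G \<beta> h' y" unfolding Dm_def using Cons.prems(3) by simp
  qed
  have "Dl G \<beta>s (Dm G \<beta> h) \<alpha> = Dl G \<beta>s (Dm G \<beta> h') \<alpha>"
    using Cons.prems by (intro Cons.IH e) auto
  then show ?case by simp
qed

lemma P_local:
  assumes "\<And>\<beta>s \<alpha>. length \<beta>s \<le> n \<Longrightarrow> set \<beta>s \<subseteq> FE \<Longrightarrow> \<alpha> \<in> FE \<Longrightarrow>
     \<exists>h'. Pn G Gs n k h' \<and> (\<forall>y. y \<subseteq> \<alpha> \<union> \<Union>(set \<beta>s) \<longrightarrow> h y = h' y)"
  shows "Pn G Gs n k h"
  unfolding Pn_def
proof (intro allI impI)
  fix \<beta>s \<alpha> assume b: "length \<beta>s \<le> n" "set \<beta>s \<subseteq> FE" "\<alpha> \<in> FE"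
  obtain h' where h': "Pn G Gs n k h'" "\<forall>y. y \<subseteq> \<alpha> \<union> \<Union>(set \<beta>s) \<longrightarrow> h y = h' y"
    using assms[OF b] by blast
  have "Dl G \<beta>s h \<alpha> = Dl G \<beta>s h' \<alpha>"
    by (rule Dl_local[where U="\<alpha> \<union> \<Union>(set \<beta>s)"]) (use h'(2) in auto)
  moreover have "Dl G \<beta>s h' \<alpha> \<in> Gs (k + length \<beta>s)" using h'(1) b unfolding Pn_def by blast
  ultimately show "Dl G \<beta>s h \<alpha> \<in> Gs (k + length \<beta>s)" by simp
qed

lemma poly_imp_Pn: "poly_map G Gs g \<Longrightarrow> group G \<longrightarrow> (\<forall>i. \<one>\<^bsub>G\<^esub> \<in> Gs i) \<longrightarrow> (\<forall>n. Pn G Gs n 0 g)"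
proof (induction rule: poly_map.induct)
  case (triv Gs g)
  show ?case
  proof (intro impI allI)
    fix n assume "group G" "\<forall>i. \<one>\<^bsub>G\<^esub> \<in> Gs i"
    then have "Pn G Gs n 0 (\<lambda>_. \<one>\<^bsub>G\<^esub>)" by (intro Pn_one) auto
    then show "Pn G Gs n 0 g" by (rule Pn_congI) (use triv in auto)
  qed
next
  case (step g Gs)
  show ?case
  proof (intro impI allI)
    fix n assume grp: "group G" and one: "\<forall>i. \<one>\<^bsub>G\<^esub> \<in> Gs i"
    show "Pn G Gs n 0 g"
    proof (cases n)
      case 0 then show ?thesis using step.hyps(1) by (simp add: Pn_0)
    next
      case (Suc m)
      show ?thesis unfolding Suc Pn_Suc
      proof (intro conjI ballI)
        fix \<alpha> assume "\<alpha> \<in> FE" then show "g \<alpha> \<in> Gs 0" using step.hyps(1) by simp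
      next
        fix \<beta> assume \<beta>: "\<beta> \<in> FE"
        obtain Dg where Dg: "\<forall>n. Pn G (\<lambda>i. Gs (Suc i)) n 0 Dg"
          "\<forall>\<alpha>\<in>FE. \<alpha> \<inter> \<beta> = {} \<longrightarrow> Dg \<alpha> = inv\<^bsub>G\<^esub> (g \<alpha>) \<otimes>\<^bsub>G\<^esub> g (\<alpha> \<union> \<beta>)"
          using step.IH \<beta> grp one by blast
        have "Pn G (\<lambda>i. Gs (Suc i)) m 0 (\<lambda>\<alpha>. Dg (\<alpha> - \<beta>))" using Dg(1) by (intro Pn_rm) blast
        then have "Pn G (\<lambda>i. Gs (Suc i)) m 0 (Dm G \<beta> g)"
        proof (rule Pn_congI)
          fix x assume x: "x \<in> FE"
          have "Dg (x - \<beta>) = inv\<^bsub>G\<^esub> (g (x - \<beta>)) \<otimes>\<^bsub>G\<^esub> g ((x - \<beta>) \<union> \<beta>)"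
            using Dg(2) x FE_diff by blast
          moreover have "(x - \<beta>) \<union> \<beta> = x \<union> \<beta>" by blast
          ultimately show "Dm G \<beta> g x = Dg (x - \<beta>)" unfolding Dm_def by simp
        qed
        then show "Pn G Gs m (Suc 0) (Dm G \<beta> g)" by (simp add: Pn_shift)
      qed
    qed
  qed
qed

lemma Pn_imp_poly: "Gs N = {\<one>\<^bsub>G\<^esub>} \<Longrightarrow> Pn G Gs N 0 g \<Longrightarrow> poly_map G Gs g"
proof (induction N arbitrary: Gs g)
  case 0
  have "\<forall>\<alpha>\<in>FE. g \<alpha> = \<one>\<^bsub>G\<^esub>" using 0 by (auto simp: Pn_0)
  then show ?case using 0(1) by (rule poly_map.triv[rotated])
next
  case (Suc N)
  show ?case
  proof (rule poly_map.step)
    show "\<forall>\<alpha>\<in>FE. g \<alpha> \<in> Gs 0" using Suc.prems(2) by (simp add: Pn_Suc)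
    show "\<forall>\<beta>\<in>FE. \<exists>Dg. poly_map G (\<lambda>i. Gs (Suc i)) Dg \<and>
             (\<forall>\<alpha>\<in>FE. \<alpha> \<inter> \<beta> = {} \<longrightarrow> Dg \<alpha> = inv\<^bsub>G\<^esub> (g \<alpha>) \<otimes>\<^bsub>G\<^esub> g (\<alpha> \<union> \<beta>))"
    proof (intro ballI)
      fix \<beta> assume \<beta>: "\<beta> \<in> FE"
      have "Pn G Gs N (Suc 0) (Dm G \<beta> g)" using Suc.prems(2) \<beta> by (simp add: Pn_Suc)
      then have "Pn G (\<lambda>i. Gs (Suc i)) N 0 (Dm G \<beta> g)" by (simp add: Pn_shift)
      then have 1: "poly_map G (\<lambda>i. Gs (Suc i)) (Dm G \<beta> g)" by (intro Suc.IH) (use Suc.prems in auto)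
      have 2: "\<forall>\<alpha>\<in>FE. \<alpha> \<inter> \<beta> = {} \<longrightarrow> Dm G \<beta> g \<alpha> = inv\<^bsub>G\<^esub> (g \<alpha>) \<otimes>\<^bsub>G\<^esub> g (\<alpha> \<union> \<beta>)"
        unfolding Dm_def by (auto simp: Diff_triv)
      show "\<exists>Dg. poly_map G (\<lambda>i. Gs (Suc i)) Dg \<and>
             (\<forall>\<alpha>\<in>FE. \<alpha> \<inter> \<beta> = {} \<longrightarrow> Dg \<alpha> = inv\<^bsub>G\<^esub> (g \<alpha>) \<otimes>\<^bsub>G\<^esub> g (\<alpha> \<union> \<beta>))"
        using 1 2 by blast
    qed
  qed
qed

definition adS :: "('a,'b) monoid_scheme \<Rightarrow> (nat set \<Rightarrow> 'a) \<Rightarrow> nat set \<Rightarrow> nat set \<Rightarrow> 'a" where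
  "adS G \<phi> S x = finprod G (\<lambda>T. \<phi> (x \<union> T) [^]\<^bsub>G\<^esub> ((-1::int) ^ card (S - T))) (Pow S)"

context comm_group begin

lemma finprod_inv_distr: "f \<in> A \<rightarrow> carrier G \<Longrightarrow> finprod G (\<lambda>x. inv (f x)) A = inv (finprod G f A)"
proof (induction A rule: infinite_finite_induct)
  case (infinite A) then show ?case by simp
next
  case empty then show ?case by simp
next
  case (insert a A)
  have fa: "f a \<in> carrier G" "f \<in> A \<rightarrow> carrier G" using insert.prems by auto
  have "finprod G (\<lambda>x. inv (f x)) (insert a A) = inv (f a) \<otimes> finprod G (\<lambda>x. inv (f x)) A"
    using insert fa by (intro finprod_insert) auto
  also have "\<dots> = inv (f a) \<otimes> inv (finprod G f A)" using insert.IH fa by simp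
  also have "\<dots> = inv (f a \<otimes> finprod G f A)" using fa by (simp add: inv_mult)
  also have "f a \<otimes> finprod G f A = finprod G f (insert a A)" using insert fa by (intro finprod_insert[symmetric]) auto
  finally show ?case .
qed

lemma adS_closed: "\<phi> \<in> UNIV \<rightarrow> carrier G \<Longrightarrow> adS G \<phi> S x \<in> carrier G"
  unfolding adS_def by (intro finprod_closed) auto

lemma adS_empty: "\<phi> \<in> UNIV \<rightarrow> carrier G \<Longrightarrow> adS G \<phi> {} x = \<phi> x"
proof -
  assume phi: "\<phi> \<in> UNIV \<rightarrow> carrier G"
  have c: "\<phi> x \<in> carrier G" using phi by auto
  show ?thesis unfolding adS_def using c by simp
qed

lemma finprod_sub:
  assumes B: "subgroup B G" and A: "finite A" "\<And>a. a \<in> A \<Longrightarrow> f a \<in> B"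
  shows "finprod G f A \<in> B"
  using A
proof (induction A rule: finite_induct)
  case empty then show ?case by (simp add: subgroup.one_closed[OF B])
next
  case (insert a A)
  have fB: "f a \<in> B" "\<And>b. b \<in> A \<Longrightarrow> f b \<in> B" using insert.prems by auto
  have fc: "f \<in> A \<rightarrow> carrier G" "f a \<in> carrier G" using fB subgroup.subset[OF B] by auto
  have "finprod G f (insert a A) = f a \<otimes> finprod G f A" using insert fc by (intro finprod_insert) auto
  moreover have "finprod G f A \<in> B" by (rule insert.IH[OF fB(2)])
  ultimately show ?case using subgroup.m_closed[OF B fB(1)] by simp
qed

lemma foldr_finprod: "distinct xs \<Longrightarrow> (\<And>x. x \<in> set xs \<Longrightarrow> f x \<in> carrier G) \<Longrightarrow>
   foldr (\<lambda>x acc. f x \<otimes> acc) xs \<one> = finprod G f (set xs)"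
proof (induction xs)
  case Nil then show ?case by simp
next
  case (Cons a xs)
  have "finprod G f (set (a # xs)) = f a \<otimes> finprod G f (set xs)"
    using Cons.prems by (simp add: Pi_iff)
  then show ?case using Cons by simp
qed

lemma adS_split:
  assumes phi: "\<phi> \<in> UNIV \<rightarrow> carrier G" and S: "finite S" "a \<notin> S"
  shows "adS G \<phi> (insert a S) x = inv (adS G \<phi> S x) \<otimes> adS G \<phi> S (insert a x)"
proof -
  define f where "f = (\<lambda>T. \<phi> (x \<union> T) [^] ((-1::int) ^ card (insert a S - T)))"
  have fc: "f \<in> B \<rightarrow> carrier G" for B unfolding f_def using phi by auto
  have disj: "Pow S \<inter> insert a ` Pow S = {}" using S by auto
  have "adS G \<phi> (insert a S) x = finprod G f (Pow S \<union> insert a ` Pow S)"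
    unfolding adS_def f_def Pow_insert ..
  also have "\<dots> = finprod G f (Pow S) \<otimes> finprod G f (insert a ` Pow S)"
    using S disj fc by (intro finprod_Un_disjoint) auto
  also have "finprod G f (Pow S) = inv (adS G \<phi> S x)"
  proof -
    have "finprod G f (Pow S) = finprod G (\<lambda>T. inv (\<phi> (x \<union> T) [^] ((-1::int) ^ card (S - T)))) (Pow S)"
    proof (rule finprod_cong')
      show "(\<lambda>T. inv (\<phi> (x \<union> T) [^] ((-1::int) ^ card (S - T)))) \<in> Pow S \<rightarrow> carrier G" using phi by auto
      fix T assume T: "T \<in> Pow S"
      have "insert a S - T = insert a (S - T)" "a \<notin> S - T" using T S by auto
      then have "card (insert a S - T) = Suc (card (S - T))" using S by simp
      then have "((-1::int) ^ card (insert a S - T)) = - ((-1::int) ^ card (S - T))" by simp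
      moreover have "\<phi> (x \<union> T) \<in> carrier G" using phi by auto
      ultimately show "f T = inv (\<phi> (x \<union> T) [^] ((-1::int) ^ card (S - T)))"
        unfolding f_def by (simp add: int_pow_neg)
    qed simp
    also have "\<dots> = inv (adS G \<phi> S x)" unfolding adS_def using phi by (intro finprod_inv_distr) auto
    finally show ?thesis .
  qed
  also have "finprod G f (insert a ` Pow S) = adS G \<phi> S (insert a x)"
  proof -
    have inj: "inj_on (insert a) (Pow S)" using S by (auto simp: inj_on_def)
    have "finprod G f (insert a ` Pow S) = finprod G (\<lambda>T. f (insert a T)) (Pow S)"
      using fc inj by (intro finprod_reindex) auto
    also have "\<dots> = adS G \<phi> S (insert a x)" unfolding adS_def
    proof (rule finprod_cong')
      show "(\<lambda>T. \<phi> (insert a x \<union> T) [^] ((-1::int) ^ card (S - T))) \<in> Pow S \<rightarrow> carrier G" using phi by auto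
      fix T assume T: "T \<in> Pow S"
      have "insert a S - insert a T = S - T" using S by auto
      moreover have "x \<union> insert a T = insert a x \<union> T" by auto
      ultimately show "f (insert a T) = \<phi> (insert a x \<union> T) [^] ((-1::int) ^ card (S - T))"
        unfolding f_def by simp
    qed simp
    finally show ?thesis .
  qed
  finally show ?thesis .
qed

lemma adS_diff:
  assumes phi: "\<phi> \<in> UNIV \<rightarrow> carrier G" and S: "finite S"
    and psi: "\<And>T. T \<subseteq> S \<Longrightarrow> \<psi> (x \<union> T) = inv (\<phi> (x \<union> T)) \<otimes> \<phi> (insert a x \<union> T)"
  shows "adS G \<psi> S x = inv (adS G \<phi> S x) \<otimes> adS G \<phi> S (insert a x)"
proof -
  have "adS G \<psi> S x = finprod G (\<lambda>T. inv (\<phi> (x \<union> T) [^] ((-1::int) ^ card (S - T))) \<otimes>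
       \<phi> (insert a x \<union> T) [^] ((-1::int) ^ card (S - T))) (Pow S)"
    unfolding adS_def
  proof (rule finprod_cong')
    fix T assume "T \<in> Pow S"
    then show "\<psi> (x \<union> T) [^] ((-1::int) ^ card (S - T)) = inv (\<phi> (x \<union> T) [^] ((-1::int) ^ card (S - T))) \<otimes>
       \<phi> (insert a x \<union> T) [^] ((-1::int) ^ card (S - T))"
    proof -
      have c: "\<phi> (x \<union> T) \<in> carrier G" "\<phi> (insert a x \<union> T) \<in> carrier G" using phi by auto
      have "\<psi> (x \<union> T) = inv (\<phi> (x \<union> T)) \<otimes> \<phi> (insert a x \<union> T)" using psi \<open>T \<in> Pow S\<close> by blast
      then show ?thesis
        by (simp only: int_pow_distrib[OF inv_closed[OF c(1)] c(2)] int_pow_inv[OF c(1)])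
    qed
  qed (use phi in \<open>auto simp: Pi_iff\<close>)
  also have "\<dots> = finprod G (\<lambda>T. inv (\<phi> (x \<union> T) [^] ((-1::int) ^ card (S - T)))) (Pow S) \<otimes>
      adS G \<phi> S (insert a x)"
    unfolding adS_def using phi by (intro finprod_multf) auto
  also have "finprod G (\<lambda>T. inv (\<phi> (x \<union> T) [^] ((-1::int) ^ card (S - T)))) (Pow S) = inv (adS G \<phi> S x)"
    unfolding adS_def using phi by (intro finprod_inv_distr) auto
  finally show ?thesis .
qed

lemma newton:
  assumes phi: "\<phi> \<in> UNIV \<rightarrow> carrier G" and R: "finite R"
  shows "\<phi> (x \<union> R) = finprod G (\<lambda>S. adS G \<phi> S x) (Pow R)"
  using R
proof (induction R arbitrary: x rule: finite_induct)
  case empty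
  have "finprod G (\<lambda>S. adS G \<phi> S x) (Pow {}) = adS G \<phi> {} x" using adS_closed[OF phi] by simp
  also have "\<dots> = \<phi> x" unfolding adS_def
  proof -
    have c: "\<phi> x \<in> carrier G" using phi by auto
    show "finprod G (\<lambda>T. \<phi> (x \<union> T) [^] ((-1::int) ^ card ({} - T))) (Pow {}) = \<phi> x"
      using c by simp
  qed
  finally show ?case by simp
next
  case (insert a R)
  have fc: "(\<lambda>S. adS G \<phi> S y) \<in> B \<rightarrow> carrier G" for y B using adS_closed[OF phi] by auto
  have disj: "Pow R \<inter> insert a ` Pow R = {}" using insert by auto
  have inj: "inj_on (insert a) (Pow R)" using insert by (auto simp: inj_on_def) (metis Diff_insert_absorb subsetD)+
  have "finprod G (\<lambda>S. adS G \<phi> S x) (Pow (insert a R)) =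
     finprod G (\<lambda>S. adS G \<phi> S x) (Pow R) \<otimes> finprod G (\<lambda>S. adS G \<phi> S x) (insert a ` Pow R)"
    unfolding Pow_insert using insert disj fc by (intro finprod_Un_disjoint) auto
  also have "finprod G (\<lambda>S. adS G \<phi> S x) (insert a ` Pow R) = finprod G (\<lambda>S. adS G \<phi> (insert a S) x) (Pow R)"
    using fc inj by (intro finprod_reindex) auto
  also have "\<dots> = finprod G (\<lambda>S. inv (adS G \<phi> S x) \<otimes> adS G \<phi> S (insert a x)) (Pow R)"
  proof (rule finprod_cong')
    fix S assume "S \<in> Pow R"
    then have "finite S" "a \<notin> S" using insert finite_subset by auto
    then show "adS G \<phi> (insert a S) x = inv (adS G \<phi> S x) \<otimes> adS G \<phi> S (insert a x)"
      by (rule adS_split[OF phi])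
  qed (use adS_closed[OF phi] in auto)
  also have "\<dots> = inv (finprod G (\<lambda>S. adS G \<phi> S x) (Pow R)) \<otimes> finprod G (\<lambda>S. adS G \<phi> S (insert a x)) (Pow R)"
    using adS_closed[OF phi] finprod_inv_distr[OF fc] by (subst finprod_multf) auto
  finally have "finprod G (\<lambda>S. adS G \<phi> S x) (Pow (insert a R)) = finprod G (\<lambda>S. adS G \<phi> S (insert a x)) (Pow R)"
    using fc by (simp add: m_assoc[symmetric])
  also have "\<dots> = \<phi> (insert a x \<union> R)" by (rule insert.IH[symmetric])
  finally show ?case by simp
qed

end

lemma subseqs_filter: "filter (\<lambda>l. set l \<subseteq> Y) (subseqs xs) = subseqs (filter (\<lambda>a. a \<in> Y) xs)"
proof (induction xs)
  case Nil then show ?case by simp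
next
  case (Cons x xs)
  show ?case
  proof (cases "x \<in> Y")
    case True
    have "filter (\<lambda>l. set l \<subseteq> Y) (map ((#) x) (subseqs xs)) = map ((#) x) (filter (\<lambda>l. set l \<subseteq> Y) (subseqs xs))"
      using True by (simp add: filter_map o_def)
    then show ?thesis using True Cons by (simp add: Let_def)
  next
    case False
    have "filter (\<lambda>l. set l \<subseteq> Y) (map ((#) x) (subseqs xs)) = []"
      using False by (simp add: filter_map o_def)
    then show ?thesis using False Cons by (simp add: Let_def)
  qed
qed

lemma sorted_filter_sub:
  assumes "finite U" "y \<subseteq> U"
  shows "filter (\<lambda>a. a \<in> y) (sorted_list_of_set U) = sorted_list_of_set (y::nat set)"
proof (rule sorted_distinct_set_unique)
  show "sorted (filter (\<lambda>a. a \<in> y) (sorted_list_of_set U))"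
    using sorted_wrt_filter[of "(\<le>)" "sorted_list_of_set U"] by simp
  show "distinct (filter (\<lambda>a. a \<in> y) (sorted_list_of_set U))" by simp
  have "finite y" using assms finite_subset by blast
  then show "sorted (sorted_list_of_set y)" "distinct (sorted_list_of_set y)" by simp_all
  show "set (filter (\<lambda>a. a \<in> y) (sorted_list_of_set U)) = set (sorted_list_of_set y)"
    using assms \<open>finite y\<close> by auto
qed

definition Ls :: "nat \<Rightarrow> nat set \<Rightarrow> nat set list" where
  "Ls r \<alpha> = map set (filter (\<lambda>l. length l \<le> r) (subseqs (sorted_list_of_set \<alpha>)))"

lemma Ls_filter:
  assumes "finite U" "y \<subseteq> U"
  shows "filter (\<lambda>\<beta>. \<beta> \<subseteq> y) (Ls r U) = Ls r y"
proof -
  have "filter (\<lambda>\<beta>. \<beta> \<subseteq> y) (Ls r U) =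
      map set (filter (\<lambda>l. set l \<subseteq> y) (filter (\<lambda>l. length l \<le> r) (subseqs (sorted_list_of_set U))))"
    unfolding Ls_def by (simp add: filter_map o_def)
  also have "\<dots> = map set (filter (\<lambda>l. length l \<le> r) (filter (\<lambda>l. set l \<subseteq> y) (subseqs (sorted_list_of_set U))))"
    by (simp add: conj_commute)
  also have "\<dots> = Ls r y" unfolding Ls_def subseqs_filter sorted_filter_sub[OF assms] ..
  finally show ?thesis .
qed

lemma Ls_distinct: "distinct (Ls r \<alpha>)"
proof -
  have "distinct (map set (subseqs (sorted_list_of_set \<alpha>)))" by (rule distinct_set_subseqs) simp
  then show ?thesis unfolding Ls_def by (rule distinct_map_filter)
qed

lemma Ls_set:
  assumes "finite \<alpha>"
  shows "set (Ls r \<alpha>) = {\<beta>. \<beta> \<subseteq> \<alpha> \<and> card \<beta> \<le> r}"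
proof
  show "set (Ls r \<alpha>) \<subseteq> {\<beta>. \<beta> \<subseteq> \<alpha> \<and> card \<beta> \<le> r}"
  proof
    fix \<beta> assume "\<beta> \<in> set (Ls r \<alpha>)"
    then obtain l where l: "l \<in> set (subseqs (sorted_list_of_set \<alpha>))" "length l \<le> r" "\<beta> = set l"
      unfolding Ls_def by auto
    have "distinct l" using subseqs_distinctD[OF l(1)] by simp
    then have "card \<beta> \<le> r" using l by (simp add: distinct_card)
    moreover have "set ` set (subseqs (sorted_list_of_set \<alpha>)) = Pow \<alpha>"
      using subseqs_powset[of "sorted_list_of_set \<alpha>"] assms by simp
    then have "\<beta> \<subseteq> \<alpha>" using l by auto
    ultimately show "\<beta> \<in> {\<beta>. \<beta> \<subseteq> \<alpha> \<and> card \<beta> \<le> r}" by simp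
  qed
  show "{\<beta>. \<beta> \<subseteq> \<alpha> \<and> card \<beta> \<le> r} \<subseteq> set (Ls r \<alpha>)"
  proof
    fix \<beta> assume b: "\<beta> \<in> {\<beta>. \<beta> \<subseteq> \<alpha> \<and> card \<beta> \<le> r}"
    have "set ` set (subseqs (sorted_list_of_set \<alpha>)) = Pow \<alpha>"
      using subseqs_powset[of "sorted_list_of_set \<alpha>"] assms by simp
    then have "\<beta> \<in> set ` set (subseqs (sorted_list_of_set \<alpha>))" using b by auto
    then obtain l where l: "l \<in> set (subseqs (sorted_list_of_set \<alpha>))" "\<beta> = set l" by auto
    have "distinct l" using subseqs_distinctD[OF l(1)] by simp
    then have "length l \<le> r" using l b by (simp add: distinct_card)
    then show "\<beta> \<in> set (Ls r \<alpha>)" unfolding Ls_def using l by auto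
  qed
qed

context group begin

lemma foldr_sub: "subgroup S G \<Longrightarrow> (\<And>x. x \<in> set xs \<Longrightarrow> f x \<in> S) \<Longrightarrow> foldr (\<lambda>x acc. f x \<otimes> acc) xs \<one> \<in> S"
  by (induction xs) (auto intro: subgroup.m_closed subgroup.one_closed)

lemma foldr_filter_one: "(\<And>x. x \<in> set xs \<Longrightarrow> f x \<in> carrier G) \<Longrightarrow>
   foldr (\<lambda>x acc. (if P x then f x else \<one>) \<otimes> acc) xs \<one> = foldr (\<lambda>x acc. f x \<otimes> acc) (filter P xs) \<one>"
proof (induction xs)
  case Nil then show ?case by simp
next
  case (Cons a xs)
  have c: "foldr (\<lambda>x acc. f x \<otimes> acc) (filter P xs) \<one> \<in> carrier G"
    using Cons.prems by (intro foldr_sub[OF subgroup_self]) auto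
  show ?case using Cons c by auto
qed

end


locale pfilG = pfil G Gs for G :: "('a,'b) monoid_scheme" (structure) and Gs +
  fixes \<Gamma> :: "'a set"
  assumes \<Gamma>_sub: "subgroup \<Gamma> G" and G0: "Gs 0 = carrier G"
begin

lemma conjn: assumes x: "x \<in> carrier G" and z: "z \<in> Gs r" shows "x \<otimes> z \<otimes> inv x \<in> Gs r"
proof -
  have zc: "z \<in> carrier G" using z Gs_carr by auto
  have "cm G (inv x) (inv z) \<in> Gs (0 + r)" using x z G0 by (intro Gs_comm Gs_inv) auto
  then have "cm G (inv x) (inv z) \<otimes> z \<in> Gs r" using z by (simp add: Gs_mult)
  moreover have "cm G (inv x) (inv z) \<otimes> z = x \<otimes> z \<otimes> inv x"
    unfolding cm_def using x zc by (simp add: m_assoc)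
  ultimately show ?thesis by simp
qed

lemma SL1:
  assumes gP: "\<forall>n. Pn G Gs n 0 g" and gK: "\<forall>\<alpha>\<in>FE. \<exists>x\<in>Gs 1. \<exists>c\<in>\<Gamma>. g \<alpha> = x \<otimes> c"
  shows "\<exists>\<gamma>. (\<forall>\<alpha>\<in>FE. \<gamma> \<alpha> \<in> \<Gamma>) \<and> (\<forall>n. Pn G Gs n 0 \<gamma>) \<and> (\<forall>\<alpha>\<in>FE. g \<alpha> \<otimes> \<gamma> \<alpha> \<in> Gs 1)"
proof -
  obtain x0 c0 where x0: "x0 \<in> Gs 1" and c0: "c0 \<in> \<Gamma>" and g0: "g {} = x0 \<otimes> c0"
    using gK FE_empty by blast
  have c0c: "c0 \<in> carrier G" using c0 subgroup.subset[OF \<Gamma>_sub] by auto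
  have x0c: "x0 \<in> carrier G" using x0 Gs_carr by auto
  have mono0: "mono {} (inv c0) = (\<lambda>_. inv c0)" by (simp add: mono_def)
  show ?thesis
  proof (intro exI conjI ballI allI)
    fix \<alpha> assume "\<alpha> \<in> FE" show "inv c0 \<in> \<Gamma>" using c0 subgroup.m_inv_closed[OF \<Gamma>_sub] by auto
  next
    fix n show "Pn G Gs n 0 (\<lambda>_. inv c0)" using P_mono[of "{}" "inv c0" 0 n] c0c G0 mono0 by simp
  next
    fix \<alpha> assume a: "\<alpha> \<in> FE"
    have "Pn G Gs (Suc 0) 0 g" using gP by blast
    then have "Pn G Gs 0 (Suc 0) (Dm G \<alpha> g)" using a by (simp add: Pn_Suc)
    then have d: "Dm G \<alpha> g {} \<in> Gs 1" using FE_empty by (simp add: Pn_0)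
    have dd: "Dm G \<alpha> g {} = inv (g {}) \<otimes> g \<alpha>" unfolding Dm_def by simp
    have gc: "g {} \<in> carrier G" "g \<alpha> \<in> carrier G" using P_carr gP a FE_empty by blast+
    have dc: "Dm G \<alpha> g {} \<in> carrier G" using d Gs_carr by auto
    have "g \<alpha> = g {} \<otimes> Dm G \<alpha> g {}" unfolding dd using gc by (simp add: canc1)
    then have "g \<alpha> \<otimes> inv c0 = x0 \<otimes> (c0 \<otimes> Dm G \<alpha> g {} \<otimes> inv c0)"
      using g0 x0c c0c dc by (simp add: m_assoc)
    moreover have "c0 \<otimes> Dm G \<alpha> g {} \<otimes> inv c0 \<in> Gs 1" by (rule conjn[OF c0c d])
    ultimately show "g \<alpha> \<otimes> inv c0 \<in> Gs 1" using x0 by (simp add: Gs_mult)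
  qed
qed

end


context pfilG begin

lemma SLab:
  assumes r1: "1 \<le> r" and gP: "\<forall>n. Pn G Gs n 0 g" and gv: "\<forall>\<alpha>\<in>FE. g \<alpha> \<in> Gs r"
    and gK: "\<forall>\<alpha>\<in>FE. \<exists>x\<in>Gs (Suc r). \<exists>c\<in>\<Gamma>. g \<alpha> = x \<otimes> c"
  shows "\<exists>\<gamma>. (\<forall>\<alpha>\<in>FE. \<gamma> \<alpha> \<in> \<Gamma>) \<and> (\<forall>n. Pn G Gs n 0 \<gamma>) \<and> (\<forall>\<alpha>\<in>FE. g \<alpha> \<otimes> \<gamma> \<alpha> \<in> Gs (Suc r))"
proof -
  define Hg where "Hg = G\<lparr>carrier := Gs r\<rparr>"
  define K where "K = Gs (Suc r)"
  define Q where "Q = Hg Mod K"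
  define \<pi> where "\<pi> = (\<lambda>a. K #>\<^bsub>Hg\<^esub> a)"
  have sHr: "subgroup (Gs r) G" by (rule Gs_sub)
  have grpH: "group Hg" unfolding Hg_def by (rule subgroup_imp_group[OF sHr])
  have sK: "subgroup K Hg" unfolding Hg_def K_def by (rule subgroup_incl[OF Gs_sub Gs_sub Gs_dec])
  have carrH: "carrier Hg = Gs r" unfolding Hg_def by simp
  have multH: "\<And>a b. a \<otimes>\<^bsub>Hg\<^esub> b = a \<otimes> b" unfolding Hg_def by simp
  have oneH: "\<one>\<^bsub>Hg\<^esub> = \<one>" unfolding Hg_def by simp
  have invH: "\<And>a. a \<in> Gs r \<Longrightarrow> inv\<^bsub>Hg\<^esub> a = inv a" unfolding Hg_def by (rule m_inv_consistent[OF sHr])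
  have KH: "K \<subseteq> Gs r" unfolding K_def by (rule Gs_dec)
  have nK: "K \<lhd> Hg"
    unfolding group.normal_inv_iff[OF grpH]
  proof (intro conjI ballI sK)
    fix x h assume "x \<in> carrier Hg" "h \<in> K"
    then have x: "x \<in> carrier G" "x \<in> Gs r" and h: "h \<in> Gs (Suc r)" using carrH Gs_carr K_def by auto
    show "x \<otimes>\<^bsub>Hg\<^esub> h \<otimes>\<^bsub>Hg\<^esub> inv\<^bsub>Hg\<^esub> x \<in> K" using conjn[OF x(1) h] invH[OF x(2)] multH K_def by simp
  qed
  interpret NK: normal K Hg by (rule nK)
  have grpQ: "group Q" unfolding Q_def by (rule NK.factorgroup_is_group)
  have hom: "\<pi> \<in> hom Hg Q" unfolding \<pi>_def Q_def by (rule NK.r_coset_hom_Mod)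
  interpret GH: group_hom Hg Q \<pi> by (intro group_hom.intro group_hom_axioms.intro grpH grpQ hom)
  have \<pi>mult: "\<pi> (a \<otimes> b) = \<pi> a \<otimes>\<^bsub>Q\<^esub> \<pi> b" if "a \<in> Gs r" "b \<in> Gs r" for a b
    using GH.hom_mult[of a b] that carrH multH by simp
  have \<pi>inv: "\<pi> (inv a) = inv\<^bsub>Q\<^esub> (\<pi> a)" if "a \<in> Gs r" for a
    using GH.hom_inv[of a] that carrH invH by simp
  have \<pi>c: "\<pi> a \<in> carrier Q" if "a \<in> Gs r" for a
    using GH.hom_closed[of a] that carrH by simp
  have \<pi>one: "\<pi> \<one> = \<one>\<^bsub>Q\<^esub>" using GH.hom_one oneH by simp
  have oneQ: "\<one>\<^bsub>Q\<^esub> = K" unfolding Q_def by simp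
  have \<pi>K: "\<pi> a = \<one>\<^bsub>Q\<^esub>" if "a \<in> K" for a
    unfolding oneQ \<pi>_def using subgroup.rcos_const[OF sK grpH that] .
  have \<pi>K': "a \<in> K" if "a \<in> Gs r" "\<pi> a = \<one>\<^bsub>Q\<^esub>" for a
  proof -
    have "a \<in> K #>\<^bsub>Hg\<^esub> a" using group.rcos_self[OF grpH _ sK] that carrH by simp
    then show ?thesis using that(2) unfolding oneQ \<pi>_def by simp
  qed
  have carrQ: "carrier Q = \<pi> ` Gs r" unfolding Q_def \<pi>_def carrier_FactGroup carrH ..
  have commQ: "comm_group Q"
  proof (rule group.group_comm_groupI[OF grpQ])
    fix x y assume "x \<in> carrier Q" "y \<in> carrier Q"
    then obtain a b where a: "a \<in> Gs r" "x = \<pi> a" and b: "b \<in> Gs r" "y = \<pi> b" unfolding carrQ by auto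
    have ac: "a \<in> carrier G" and bc: "b \<in> carrier G" using a b Gs_carr by auto
    have "cm G (inv a) (inv b) \<in> Gs (r + r)" using a b by (intro Gs_comm Gs_inv)
    moreover have "Gs (r + r) \<subseteq> K" unfolding K_def using r1 by (intro Gs_mono) simp
    ultimately have k: "cm G (inv a) (inv b) \<in> K" by blast
    have kr: "cm G (inv a) (inv b) \<in> Gs r" using k KH by blast
    have e: "a \<otimes> b = cm G (inv a) (inv b) \<otimes> (b \<otimes> a)"
      unfolding cm_def using ac bc by (simp add: m_assoc canc1 canc2)
    have "x \<otimes>\<^bsub>Q\<^esub> y = \<pi> (a \<otimes> b)" using a b \<pi>mult by simp
    also have "\<dots> = \<pi> (cm G (inv a) (inv b)) \<otimes>\<^bsub>Q\<^esub> \<pi> (b \<otimes> a)"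
      unfolding e using kr a b by (intro \<pi>mult) (auto intro: Gs_mult)
    also have "\<dots> = \<pi> (b \<otimes> a)" using \<pi>K[OF k] \<pi>c a b Gs_mult monoid.l_one[OF group.is_monoid[OF grpQ]] by simp
    also have "\<dots> = y \<otimes>\<^bsub>Q\<^esub> x" using a b \<pi>mult by simp
    finally show "x \<otimes>\<^bsub>Q\<^esub> y = y \<otimes>\<^bsub>Q\<^esub> x" .
  qed
  interpret QC: comm_group Q by (rule commQ)

  have link: "\<pi> (Dl G (map (\<lambda>a. {a}) as) h x) = adS Q (\<lambda>y. if y \<in> FE then \<pi> (h y) else \<one>\<^bsub>Q\<^esub>) (set as) x"
    if "distinct as" "0 \<notin> set as" "x \<in> FE" "x \<inter> set as = {}" "\<forall>y\<in>FE. h y \<in> Gs r" for as h x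
    using that
  proof (induction as arbitrary: h)
    case Nil
    have "(\<lambda>y. if y \<in> FE then \<pi> (h y) else \<one>\<^bsub>Q\<^esub>) \<in> UNIV \<rightarrow> carrier Q" using Nil \<pi>c by auto
    then show ?case using QC.adS_empty Nil by simp
  next
    case (Cons a as)
    define h' where "h' = Dm G {a} h"
    define \<psi> where "\<psi> = (\<lambda>y. if y \<in> FE then \<pi> (h y) else \<one>\<^bsub>Q\<^esub>)"
    define \<psi>' where "\<psi>' = (\<lambda>y. if y \<in> FE then \<pi> (h' y) else \<one>\<^bsub>Q\<^esub>)"
    have aFE: "{a} \<in> FE" using Cons.prems(2) by (simp add: FE_def)
    have h'v: "\<forall>y\<in>FE. h' y \<in> Gs r"
    proof
      fix y assume y: "y \<in> FE"
      have "y - {a} \<in> FE" "y \<union> {a} \<in> FE" using FE_diff[OF y] FE_Un[OF y aFE] by blast+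
      then have "h (y - {a}) \<in> Gs r" "h (y \<union> {a}) \<in> Gs r" using Cons.prems(5) by blast+
      then show "h' y \<in> Gs r" unfolding h'_def Dm_def by (intro Gs_mult Gs_inv)
    qed
    have \<psi>c: "\<psi> \<in> UNIV \<rightarrow> carrier Q" unfolding \<psi>_def using Cons.prems(5) \<pi>c by auto
    have IH: "\<pi> (Dl G (map (\<lambda>a. {a}) as) h' x) = adS Q \<psi>' (set as) x"
      unfolding \<psi>'_def using Cons.prems h'v by (intro Cons.IH) auto
    have fin: "finite (set as)" by simp
    have anot: "a \<notin> set as" using Cons.prems(1) by simp
    have "adS Q \<psi>' (set as) x = inv\<^bsub>Q\<^esub> (adS Q \<psi> (set as) x) \<otimes>\<^bsub>Q\<^esub> adS Q \<psi> (set as) (insert a x)"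
    proof (rule QC.adS_diff[OF \<psi>c fin])
      fix T assume T: "T \<subseteq> set as"
      have fT: "finite T" using T finite_subset by blast
      have xT: "x \<union> T \<in> FE" "insert a x \<union> T \<in> FE" using Cons.prems(2,3) T fT by (auto simp: FE_def)
      have ax: "a \<notin> x \<union> T" using Cons.prems(4) T anot by auto
      have e1: "x \<union> T - {a} = x \<union> T" using ax by auto
      have e2: "x \<union> T \<union> {a} = insert a x \<union> T" by auto
      have hv: "h (x \<union> T) \<in> Gs r" "h (insert a x \<union> T) \<in> Gs r" using xT Cons.prems(5) by auto
      have "\<psi>' (x \<union> T) = \<pi> (inv (h (x \<union> T)) \<otimes> h (insert a x \<union> T))"
        unfolding \<psi>'_def h'_def Dm_def e1 e2 using xT by simp
      also have "\<dots> = inv\<^bsub>Q\<^esub> (\<pi> (h (x \<union> T))) \<otimes>\<^bsub>Q\<^esub> \<pi> (h (insert a x \<union> T))"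
        using hv \<pi>mult \<pi>inv Gs_inv by simp
      also have "\<dots> = inv\<^bsub>Q\<^esub> (\<psi> (x \<union> T)) \<otimes>\<^bsub>Q\<^esub> \<psi> (insert a x \<union> T)" unfolding \<psi>_def using xT by simp
      finally show "\<psi>' (x \<union> T) = inv\<^bsub>Q\<^esub> (\<psi> (x \<union> T)) \<otimes>\<^bsub>Q\<^esub> \<psi> (insert a x \<union> T)" .
    qed
    also have "\<dots> = adS Q \<psi> (insert a (set as)) x" by (rule QC.adS_split[OF \<psi>c fin anot, symmetric])
    finally show ?case using IH unfolding h'_def \<psi>_def by simp
  qed

  define \<phi> where "\<phi> = (\<lambda>y. if y \<in> FE then \<pi> (g y) else \<one>\<^bsub>Q\<^esub>)"
  have \<phi>c: "\<phi> \<in> UNIV \<rightarrow> carrier Q" unfolding \<phi>_def using gv \<pi>c by auto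
  define c where "c = (\<lambda>\<beta>. adS Q \<phi> \<beta> {})"
  have cc: "c \<beta> \<in> carrier Q" for \<beta> unfolding c_def by (rule QC.adS_closed[OF \<phi>c])
  have newt: "\<pi> (g \<alpha>) = finprod Q c (Pow \<alpha>)" if "\<alpha> \<in> FE" for \<alpha>
  proof -
    have "\<phi> ({} \<union> \<alpha>) = finprod Q c (Pow \<alpha>)" unfolding c_def
      using that by (intro QC.newton[OF \<phi>c]) (simp add: FE_def)
    then show ?thesis using that unfolding \<phi>_def by simp
  qed
  have cbig: "c \<beta> = \<one>\<^bsub>Q\<^esub>" if b: "\<beta> \<in> FE" "Suc r \<le> card \<beta>" for \<beta>
  proof -
    define as where "as = sorted_list_of_set \<beta>"
    have fb: "finite \<beta>" using b by (simp add: FE_def)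
    have as: "distinct as" "set as = \<beta>" "length as = card \<beta>" unfolding as_def using fb by auto
    have "c \<beta> = \<pi> (Dl G (map (\<lambda>a. {a}) as) g {})"
      unfolding c_def \<phi>_def using link[of as "{}" g] as b gv FE_empty by (simp add: FE_def)
    moreover have "Dl G (map (\<lambda>a. {a}) as) g {} \<in> Gs (0 + length (map (\<lambda>a. {a}) as))"
    proof -
      have "Pn G Gs (card \<beta>) 0 g" using gP by blast
      moreover have "set (map (\<lambda>a. {a}) as) \<subseteq> FE" using as b by (auto simp: FE_def)
      moreover have "length (map (\<lambda>a. {a}) as) \<le> card \<beta>" using as by simp
      ultimately show ?thesis unfolding Pn_def using FE_empty by blast
    qed
    moreover have "Gs (0 + length (map (\<lambda>a. {a}) as)) \<subseteq> K" unfolding K_def using as b by (intro Gs_mono) simp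
    ultimately show ?thesis using \<pi>K by auto
  qed
  define B where "B = \<pi> ` (\<Gamma> \<inter> Gs r)"
  have sB: "subgroup B Q" unfolding B_def
  proof (rule GH.subgroup_img_is_subgroup)
    show "subgroup (\<Gamma> \<inter> Gs r) Hg" unfolding Hg_def
      by (rule subgroup_incl[OF subgroups_Inter_pair[OF \<Gamma>_sub Gs_sub] Gs_sub]) blast
  qed
  have \<phi>B: "\<phi> y \<in> B" for y
  proof (cases "y \<in> FE")
    case True
    obtain x d where x: "x \<in> K" and d: "d \<in> \<Gamma>" and gy: "g y = x \<otimes> d" using gK True K_def by blast
    have xr: "x \<in> Gs r" using x KH by blast
    have xc: "x \<in> carrier G" and dc: "d \<in> carrier G" using xr Gs_carr d subgroup.subset[OF \<Gamma>_sub] by auto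
    have "d = inv x \<otimes> g y" using gy xc dc by (simp add: canc2)
    then have dr: "d \<in> Gs r" using xr gv True by (simp add: Gs_mult Gs_inv)
    have "\<phi> y = \<pi> x \<otimes>\<^bsub>Q\<^esub> \<pi> d" unfolding \<phi>_def using True gy \<pi>mult xr dr by simp
    also have "\<dots> = \<pi> d" using \<pi>K[OF x] \<pi>c[OF dr] monoid.l_one[OF group.is_monoid[OF grpQ]] by simp
    finally show ?thesis unfolding B_def using d dr by auto
  next
    case False then show ?thesis unfolding \<phi>_def using subgroup.one_closed[OF sB] by simp
  qed
  have cB: "c \<beta> \<in> B" if "finite \<beta>" for \<beta>
    unfolding c_def adS_def
    using that by (intro QC.finprod_sub[OF sB]) (auto intro: group.subgroup_int_pow_closed[OF grpQ sB] \<phi>B)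
  define \<gamma>\<beta> where "\<gamma>\<beta> = (\<lambda>\<beta>. if \<beta> \<in> FE \<and> card \<beta> \<le> r then (SOME d. d \<in> \<Gamma> \<inter> Gs r \<and> \<pi> d = inv\<^bsub>Q\<^esub> (c \<beta>)) else \<one>)"
  have \<gamma>\<beta>1: "\<gamma>\<beta> \<beta> \<in> \<Gamma> \<inter> Gs r \<and> (\<beta> \<in> FE \<longrightarrow> card \<beta> \<le> r \<longrightarrow> \<pi> (\<gamma>\<beta> \<beta>) = inv\<^bsub>Q\<^esub> (c \<beta>))" for \<beta>
  proof (cases "\<beta> \<in> FE \<and> card \<beta> \<le> r")
    case True
    have "inv\<^bsub>Q\<^esub> (c \<beta>) \<in> B" using True cB subgroup.m_inv_closed[OF sB] by (auto simp: FE_def)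
    then have ex: "\<exists>d. d \<in> \<Gamma> \<inter> Gs r \<and> \<pi> d = inv\<^bsub>Q\<^esub> (c \<beta>)" unfolding B_def by auto
    show ?thesis unfolding \<gamma>\<beta>_def using True someI_ex[OF ex] by simp
  next
    case False
    then show ?thesis unfolding \<gamma>\<beta>_def using subgroup.one_closed[OF \<Gamma>_sub] Gs_one by auto
  qed
  define \<gamma> where "\<gamma> = (\<lambda>\<alpha>. foldr (\<lambda>\<beta> acc. \<gamma>\<beta> \<beta> \<otimes> acc) (Ls r \<alpha>) \<one>)"
  have \<gamma>\<Gamma>: "\<gamma> \<alpha> \<in> \<Gamma>" for \<alpha> unfolding \<gamma>_def using \<gamma>\<beta>1 by (intro foldr_sub[OF \<Gamma>_sub]) blast
  have \<gamma>r: "\<gamma> \<alpha> \<in> Gs r" for \<alpha> unfolding \<gamma>_def using \<gamma>\<beta>1 by (intro foldr_sub[OF Gs_sub]) blast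
  have \<pi>foldr: "\<pi> (foldr (\<lambda>\<beta> acc. \<gamma>\<beta> \<beta> \<otimes> acc) xs \<one>) = foldr (\<lambda>\<beta> acc. \<pi> (\<gamma>\<beta> \<beta>) \<otimes>\<^bsub>Q\<^esub> acc) xs \<one>\<^bsub>Q\<^esub>" for xs
  proof (induction xs)
    case Nil then show ?case using \<pi>one by simp
  next
    case (Cons \<beta> xs)
    have "foldr (\<lambda>\<beta> acc. \<gamma>\<beta> \<beta> \<otimes> acc) xs \<one> \<in> Gs r" using \<gamma>\<beta>1 by (intro foldr_sub[OF Gs_sub]) blast
    then show ?case using Cons \<pi>mult \<gamma>\<beta>1 by simp
  qed
  have goodK: "g \<alpha> \<otimes> \<gamma> \<alpha> \<in> Gs (Suc r)" if a: "\<alpha> \<in> FE" for \<alpha>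
  proof -
    have fa: "finite \<alpha>" using a by (simp add: FE_def)
    define Sm where "Sm = {\<beta>. \<beta> \<subseteq> \<alpha> \<and> card \<beta> \<le> r}"
    define Bg where "Bg = {\<beta>. \<beta> \<subseteq> \<alpha> \<and> \<not> card \<beta> \<le> r}"
    have PowS: "Pow \<alpha> = Sm \<union> Bg" "Sm \<inter> Bg = {}" unfolding Sm_def Bg_def by auto
    have finS: "finite Sm" "finite Bg" unfolding Sm_def Bg_def using fa by auto
    have cPi: "c \<in> A \<rightarrow> carrier Q" for A using cc by auto
    have subFE: "\<beta> \<in> FE" if "\<beta> \<subseteq> \<alpha>" for \<beta> using a that finite_subset by (auto simp: FE_def)
    have "\<pi> (\<gamma> \<alpha>) = foldr (\<lambda>\<beta> acc. \<pi> (\<gamma>\<beta> \<beta>) \<otimes>\<^bsub>Q\<^esub> acc) (Ls r \<alpha>) \<one>\<^bsub>Q\<^esub>" unfolding \<gamma>_def by (rule \<pi>foldr)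
    also have "\<dots> = finprod Q (\<lambda>\<beta>. \<pi> (\<gamma>\<beta> \<beta>)) (set (Ls r \<alpha>))"
      using \<gamma>\<beta>1 \<pi>c by (intro QC.foldr_finprod Ls_distinct) blast
    also have "\<dots> = finprod Q (\<lambda>\<beta>. inv\<^bsub>Q\<^esub> (c \<beta>)) Sm"
    proof (rule QC.finprod_cong')
      show "set (Ls r \<alpha>) = Sm" unfolding Sm_def by (rule Ls_set[OF fa])
      show "(\<lambda>\<beta>. inv\<^bsub>Q\<^esub> (c \<beta>)) \<in> Sm \<rightarrow> carrier Q" using cc by auto
      fix \<beta> assume "\<beta> \<in> Sm"
      then show "\<pi> (\<gamma>\<beta> \<beta>) = inv\<^bsub>Q\<^esub> (c \<beta>)" using \<gamma>\<beta>1[of \<beta>] subFE unfolding Sm_def by blast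
    qed
    also have "\<dots> = inv\<^bsub>Q\<^esub> (finprod Q c Sm)" by (rule QC.finprod_inv_distr[OF cPi])
    finally have e1: "\<pi> (\<gamma> \<alpha>) = inv\<^bsub>Q\<^esub> (finprod Q c Sm)" .
    have "\<pi> (g \<alpha>) = finprod Q c (Sm \<union> Bg)" using newt[OF a] PowS by simp
    also have "\<dots> = finprod Q c Sm \<otimes>\<^bsub>Q\<^esub> finprod Q c Bg"
      using finS PowS(2) cPi by (intro QC.finprod_Un_disjoint) auto
    also have "finprod Q c Bg = \<one>\<^bsub>Q\<^esub>"
      by (rule QC.finprod_one_eqI) (use cbig subFE in \<open>auto simp: Bg_def\<close>)
    finally have e2: "\<pi> (g \<alpha>) = finprod Q c Sm"
      using QC.finprod_closed[OF cPi] by simp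
    have "\<pi> (g \<alpha> \<otimes> \<gamma> \<alpha>) = \<pi> (g \<alpha>) \<otimes>\<^bsub>Q\<^esub> \<pi> (\<gamma> \<alpha>)" using \<pi>mult gv a \<gamma>r by simp
    also have "\<dots> = \<one>\<^bsub>Q\<^esub>" unfolding e1 e2 using QC.finprod_closed[OF cPi] by simp
    finally have "\<pi> (g \<alpha> \<otimes> \<gamma> \<alpha>) = \<one>\<^bsub>Q\<^esub>" .
    moreover have "g \<alpha> \<otimes> \<gamma> \<alpha> \<in> Gs r" using gv a \<gamma>r Gs_mult by simp
    ultimately show ?thesis using \<pi>K' K_def by simp
  qed
  have \<gamma>P: "Pn G Gs n 0 \<gamma>" for n
  proof (rule P_local)
    fix \<beta>s \<alpha> assume b: "length \<beta>s \<le> n" "set \<beta>s \<subseteq> FE" "\<alpha> \<in> FE"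
    define U where "U = \<alpha> \<union> \<Union>(set \<beta>s)"
    have fU: "finite U" unfolding U_def using b by (auto simp: FE_def)
    define h' where "h' = prodl (map (\<lambda>\<beta>. mono \<beta> (\<gamma>\<beta> \<beta>)) (Ls r U))"
    have "Pn G Gs n 0 h'" unfolding h'_def
    proof (rule P_prodl)
      fix f assume "f \<in> set (map (\<lambda>\<beta>. mono \<beta> (\<gamma>\<beta> \<beta>)) (Ls r U))"
      then obtain \<beta> where \<beta>: "\<beta> \<in> set (Ls r U)" "f = mono \<beta> (\<gamma>\<beta> \<beta>)" by auto
      have \<beta>1: "\<beta> \<subseteq> U" "card \<beta> \<le> r" using \<beta>(1) Ls_set[OF fU] by auto
      have fb: "finite \<beta>" using \<beta>1 fU finite_subset by blast
      have "\<gamma>\<beta> \<beta> \<in> Gs (0 + card \<beta>)" using \<gamma>\<beta>1[of \<beta>] Gs_mono[of "card \<beta>" r] \<beta>1 by auto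
      then show "Pn G Gs n 0 f" unfolding \<beta>(2) by (rule P_mono[OF fb])
    qed
    moreover have "\<gamma> y = h' y" if y: "y \<subseteq> U" for y
    proof -
      have cs: "\<And>x. x \<in> set (Ls r U) \<Longrightarrow> \<gamma>\<beta> x \<in> carrier G" using \<gamma>\<beta>1 Gs_carr by blast
      have "h' y = foldr (\<lambda>\<beta> acc. (if \<beta> \<subseteq> y then \<gamma>\<beta> \<beta> else \<one>) \<otimes> acc) (Ls r U) \<one>"
        unfolding h'_def prodl_def mono_def by (simp add: foldr_map o_def)
      also have "\<dots> = foldr (\<lambda>\<beta> acc. \<gamma>\<beta> \<beta> \<otimes> acc) (filter (\<lambda>\<beta>. \<beta> \<subseteq> y) (Ls r U)) \<one>"
        by (rule foldr_filter_one[OF cs])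
      also have "\<dots> = \<gamma> y" unfolding \<gamma>_def Ls_filter[OF fU y] ..
      finally show ?thesis by simp
    qed
    ultimately show "\<exists>h'. Pn G Gs n 0 h' \<and> (\<forall>y. y \<subseteq> \<alpha> \<union> \<Union>(set \<beta>s) \<longrightarrow> \<gamma> y = h' y)"
      unfolding U_def by blast
  qed
  show ?thesis using \<gamma>\<Gamma> \<gamma>P goodK by blast
qed

end


context pfilG begin

lemma KL:
  "(\<forall>n. Pn G Gs n 0 g) \<Longrightarrow> (\<forall>\<alpha>\<in>FE. \<exists>x\<in>Gs r. \<exists>c\<in>\<Gamma>. g \<alpha> = x \<otimes> c) \<Longrightarrow>
   \<exists>\<gamma>. (\<forall>\<alpha>\<in>FE. \<gamma> \<alpha> \<in> \<Gamma>) \<and> (\<forall>n. Pn G Gs n 0 \<gamma>) \<and> (\<forall>\<alpha>\<in>FE. g \<alpha> \<otimes> \<gamma> \<alpha> \<in> Gs r)"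
proof (induction r arbitrary: g)
  case 0
  show ?case
  proof (intro exI conjI ballI allI)
    fix \<alpha> assume a: "\<alpha> \<in> FE"
    show "\<one> \<in> \<Gamma>" by (rule subgroup.one_closed[OF \<Gamma>_sub])
    have "g \<alpha> \<in> carrier G" using P_carr 0 a by blast
    then show "g \<alpha> \<otimes> \<one> \<in> Gs 0" using G0 by simp
  next
    fix n show "Pn G Gs n 0 (\<lambda>_. \<one>)" by (rule P_one)
  qed
next
  case (Suc r)
  have h: "\<forall>\<alpha>\<in>FE. \<exists>x\<in>Gs r. \<exists>c\<in>\<Gamma>. g \<alpha> = x \<otimes> c" using Suc.prems(2) Gs_dec by blast
  obtain \<gamma>1 where \<gamma>1: "\<forall>\<alpha>\<in>FE. \<gamma>1 \<alpha> \<in> \<Gamma>" "\<forall>n. Pn G Gs n 0 \<gamma>1" "\<forall>\<alpha>\<in>FE. g \<alpha> \<otimes> \<gamma>1 \<alpha> \<in> Gs r"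
    using Suc.IH[OF Suc.prems(1) h] by blast
  define g1 where "g1 = mulf G g \<gamma>1"
  have g1P: "\<forall>n. Pn G Gs n 0 g1" unfolding g1_def using Suc.prems(1) \<gamma>1(2) P_mul by blast
  have g1v: "\<forall>\<alpha>\<in>FE. g1 \<alpha> \<in> Gs r" unfolding g1_def mulf_def using \<gamma>1(3) by blast
  have g1K: "\<forall>\<alpha>\<in>FE. \<exists>x\<in>Gs (Suc r). \<exists>c\<in>\<Gamma>. g1 \<alpha> = x \<otimes> c"
  proof
    fix \<alpha> assume a: "\<alpha> \<in> FE"
    obtain x c where x: "x \<in> Gs (Suc r)" and c: "c \<in> \<Gamma>" and e: "g \<alpha> = x \<otimes> c" using Suc.prems(2) a by blast
    have xc: "x \<in> carrier G" "c \<in> carrier G" "\<gamma>1 \<alpha> \<in> carrier G"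
      using x Gs_carr c \<gamma>1(1) a subgroup.subset[OF \<Gamma>_sub] by auto
    have "g1 \<alpha> = x \<otimes> (c \<otimes> \<gamma>1 \<alpha>)" unfolding g1_def mulf_def e using xc by (simp add: m_assoc)
    moreover have "c \<otimes> \<gamma>1 \<alpha> \<in> \<Gamma>" using c \<gamma>1(1) a subgroup.m_closed[OF \<Gamma>_sub] by blast
    ultimately show "\<exists>x\<in>Gs (Suc r). \<exists>c\<in>\<Gamma>. g1 \<alpha> = x \<otimes> c" using x by blast
  qed
  obtain \<gamma>2 where \<gamma>2: "\<forall>\<alpha>\<in>FE. \<gamma>2 \<alpha> \<in> \<Gamma>" "\<forall>n. Pn G Gs n 0 \<gamma>2" "\<forall>\<alpha>\<in>FE. g1 \<alpha> \<otimes> \<gamma>2 \<alpha> \<in> Gs (Suc r)"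
  proof (cases "r = 0")
    case True
    then show ?thesis using SL1[OF g1P] g1K that by auto
  next
    case False
    then show ?thesis using SLab[OF _ g1P g1v g1K] that by auto
  qed
  show ?case
  proof (intro exI conjI ballI allI)
    fix \<alpha> assume a: "\<alpha> \<in> FE"
    show "mulf G \<gamma>1 \<gamma>2 \<alpha> \<in> \<Gamma>" unfolding mulf_def using \<gamma>1(1) \<gamma>2(1) a subgroup.m_closed[OF \<Gamma>_sub] by blast
    have c: "g \<alpha> \<in> carrier G" "\<gamma>1 \<alpha> \<in> carrier G" "\<gamma>2 \<alpha> \<in> carrier G"
      using P_carr Suc.prems(1) \<gamma>1(1) \<gamma>2(1) a subgroup.subset[OF \<Gamma>_sub] by blast+
    have "g \<alpha> \<otimes> mulf G \<gamma>1 \<gamma>2 \<alpha> = g1 \<alpha> \<otimes> \<gamma>2 \<alpha>" unfolding g1_def mulf_def using c by (simp add: m_assoc)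
    then show "g \<alpha> \<otimes> mulf G \<gamma>1 \<gamma>2 \<alpha> \<in> Gs (Suc r)" using \<gamma>2(3) a by simp
  next
    fix n show "Pn G Gs n 0 (mulf G \<gamma>1 \<gamma>2)" using \<gamma>1(2) \<gamma>2(2) P_mul by blast
  qed
qed

end

theorem lemma5p2:
  fixes G :: "('a, 'b) monoid_scheme" and T :: "'a topology"
    and Gs :: "nat \<Rightarrow> 'a set" and \<Gamma> :: "'a set" and d r :: nat
  assumes "nilmanifold G T Gs \<Gamma> d"
    and "r \<le> d"
  shows "bij_betw (\<lambda>h. \<lambda>\<alpha>\<in>FE. coset_incl G \<Gamma> (h \<alpha>))
           (poly_quot G (\<lambda>i. if i \<le> r then Gs r else Gs i) (Gs r \<inter> \<Gamma>))
           {f \<in> poly_quot G Gs \<Gamma>. \<forall>\<alpha>\<in>FE. f \<alpha> \<in> {g <#\<^bsub>G\<^esub> \<Gamma> | g. g \<in> Gs r}}"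
proof -
  have grp: "group G" and sG: "subgroup \<Gamma> G" and pf: "prefiltration G Gs d"
    using assms(1) unfolding nilmanifold_def lie_group_def topological_group_def by auto
  have G0: "Gs 0 = carrier G" and sub: "\<And>i. subgroup (Gs i) G" and dec: "\<And>i. Gs (Suc i) \<subseteq> Gs i"
    and csub: "\<And>i j. comm_subgroup G (Gs i) (Gs j) \<subseteq> Gs (i + j)" and top: "Gs (Suc d) = {\<one>\<^bsub>G\<^esub>}"
    using pf unfolding prefiltration_def by auto
  interpret grpG: group G by (rule grp)
  have comm: "cm G x y \<in> Gs (i + j)" if "x \<in> Gs i" "y \<in> Gs j" for x y i j
  proof -
    have xc: "x \<in> carrier G" "y \<in> carrier G" using that subgroup.subset[OF sub] by blast+
    have eq: "cm G x y = grp_commutator G (inv\<^bsub>G\<^esub> x) (inv\<^bsub>G\<^esub> y)"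
      unfolding cm_def grp_commutator_def using xc by simp
    have "inv\<^bsub>G\<^esub> x \<in> Gs i" "inv\<^bsub>G\<^esub> y \<in> Gs j" using that subgroup.m_inv_closed[OF sub] by blast+
    then have m: "grp_commutator G (inv\<^bsub>G\<^esub> x) (inv\<^bsub>G\<^esub> y) \<in> comm_subgroup G (Gs i) (Gs j)"
      unfolding comm_subgroup_def by (intro generate.incl) blast
    have "grp_commutator G (inv\<^bsub>G\<^esub> x) (inv\<^bsub>G\<^esub> y) \<in> Gs (i + j)" using csub[of i j] m by (rule subsetD)
    then show ?thesis using eq by simp
  qed
  interpret P: pfilG G Gs \<Gamma>
    by (intro pfilG.intro pfil.intro pfil_axioms.intro pfilG_axioms.intro grp sub dec comm sG G0)
  define Gt where "Gt = (\<lambda>i. if i \<le> r then Gs r else Gs i)"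
  define \<Lambda> where "\<Lambda> = Gs r \<inter> \<Gamma>"
  have sL: "subgroup \<Lambda> G" unfolding \<Lambda>_def by (rule grpG.subgroups_Inter_pair[OF sub sG])
  have GtGs: "Gt i \<subseteq> Gs i" for i unfolding Gt_def using P.Gs_mono by auto
  have Gt1: "\<forall>i. \<one>\<^bsub>G\<^esub> \<in> Gt i" unfolding Gt_def using P.Gs_one by auto
  have Gttop: "Gt (Suc d) = {\<one>\<^bsub>G\<^esub>}" unfolding Gt_def using assms(2) top by auto
  have GsP: "\<forall>n. Pn G Gs n 0 g" if "poly_map G Gs g" for g
    using poly_imp_Pn[OF that] grp P.Gs_one by blast
  have GtP: "\<forall>n. Pn G Gt n 0 g" if "poly_map G Gt g" for g
    using poly_imp_Pn[OF that] grp Gt1 by blast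
  have a: "g \<alpha> \<in> Gs r" if "poly_map G Gt g" "\<alpha> \<in> FE" for g \<alpha>
  proof -
    have "Pn G Gt 0 0 g" using GtP[OF that(1)] by blast
    then show ?thesis using that(2) unfolding Pn_0 Gt_def by simp
  qed
  have b: "poly_map G Gs g" if "poly_map G Gt g" for g
  proof -
    have "Pn G Gt (Suc d) 0 g" using GtP[OF that] by blast
    then have "Pn G Gs (Suc d) 0 g" unfolding Pn_def using GtGs by blast
    then show ?thesis by (rule Pn_imp_poly[where Gs=Gs and N="Suc d", OF top])
  qed
  have c: "poly_map G Gt h" if hP: "\<forall>n. Pn G Gs n 0 h" and hv: "\<forall>\<alpha>\<in>FE. h \<alpha> \<in> Gs r" for h
  proof -
    have "Pn G Gt (Suc d) 0 h" unfolding Pn_def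
    proof (intro allI impI)
      fix \<beta>s \<alpha> assume bs: "length \<beta>s \<le> Suc d" "set \<beta>s \<subseteq> FE" "\<alpha> \<in> FE"
      show "Dl G \<beta>s h \<alpha> \<in> Gt (0 + length \<beta>s)"
      proof (cases "length \<beta>s \<le> r")
        case True
        have "Dl G \<beta>s h \<alpha> \<in> Gs r" using hv bs by (intro Dl_subgroup[OF sub grp]) auto
        then show ?thesis using True unfolding Gt_def by simp
      next
        case False
        have "Pn G Gs (Suc d) 0 h" using hP by blast
        then have "Dl G \<beta>s h \<alpha> \<in> Gs (0 + length \<beta>s)" unfolding Pn_def using bs by blast
        then show ?thesis using False unfolding Gt_def by simp
      qed
    qed
    then show ?thesis by (rule Pn_imp_poly[where Gs=Gt and N="Suc d", OF Gttop])
  qed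
  have cosL: "(x <#\<^bsub>G\<^esub> \<Lambda>) <#>\<^bsub>G\<^esub> \<Gamma> = x <#\<^bsub>G\<^esub> \<Gamma>" if x: "x \<in> carrier G" for x
  proof
    show "(x <#\<^bsub>G\<^esub> \<Lambda>) <#>\<^bsub>G\<^esub> \<Gamma> \<subseteq> x <#\<^bsub>G\<^esub> \<Gamma>"
    proof
      fix z assume "z \<in> (x <#\<^bsub>G\<^esub> \<Lambda>) <#>\<^bsub>G\<^esub> \<Gamma>"
      then obtain l c where l: "l \<in> \<Lambda>" and cc: "c \<in> \<Gamma>" and z: "z = x \<otimes>\<^bsub>G\<^esub> l \<otimes>\<^bsub>G\<^esub> c"
        unfolding set_mult_def l_coset_def by auto
      have lc: "l \<in> carrier G" "c \<in> carrier G" using l cc sL sG subgroup.subset by blast+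
      have "z = x \<otimes>\<^bsub>G\<^esub> (l \<otimes>\<^bsub>G\<^esub> c)" using z x lc by (simp add: grpG.m_assoc)
      moreover have "l \<otimes>\<^bsub>G\<^esub> c \<in> \<Gamma>" using l cc subgroup.m_closed[OF sG] unfolding \<Lambda>_def by blast
      ultimately show "z \<in> x <#\<^bsub>G\<^esub> \<Gamma>" unfolding l_coset_def by blast
    qed
    show "x <#\<^bsub>G\<^esub> \<Gamma> \<subseteq> (x <#\<^bsub>G\<^esub> \<Lambda>) <#>\<^bsub>G\<^esub> \<Gamma>"
    proof
      fix z assume "z \<in> x <#\<^bsub>G\<^esub> \<Gamma>"
      then obtain c where cc: "c \<in> \<Gamma>" and z: "z = x \<otimes>\<^bsub>G\<^esub> c" unfolding l_coset_def by auto
      have "x \<otimes>\<^bsub>G\<^esub> \<one>\<^bsub>G\<^esub> \<in> x <#\<^bsub>G\<^esub> \<Lambda>" using subgroup.one_closed[OF sL] unfolding l_coset_def by blast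
      moreover have "z = (x \<otimes>\<^bsub>G\<^esub> \<one>\<^bsub>G\<^esub>) \<otimes>\<^bsub>G\<^esub> c" using z x by simp
      ultimately show "z \<in> (x <#\<^bsub>G\<^esub> \<Lambda>) <#>\<^bsub>G\<^esub> \<Gamma>" using cc unfolding set_mult_def by blast
    qed
  qed
  have cosE: "inv\<^bsub>G\<^esub> x \<otimes>\<^bsub>G\<^esub> y \<in> H" if "x \<in> carrier G" "y \<in> carrier G" "subgroup H G"
      "x <#\<^bsub>G\<^esub> H = y <#\<^bsub>G\<^esub> H" for x y H
  proof -
    have "y \<otimes>\<^bsub>G\<^esub> \<one>\<^bsub>G\<^esub> \<in> y <#\<^bsub>G\<^esub> H" using subgroup.one_closed[OF that(3)] unfolding l_coset_def by blast
    then have "y \<in> x <#\<^bsub>G\<^esub> H" using that by simp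
    then obtain c where c: "c \<in> H" "y = x \<otimes>\<^bsub>G\<^esub> c" unfolding l_coset_def by auto
    have "c \<in> carrier G" using c subgroup.subset[OF that(3)] by blast
    then have "inv\<^bsub>G\<^esub> x \<otimes>\<^bsub>G\<^esub> y = c" using c that by (simp add: grpG.canc2)
    then show ?thesis using c by simp
  qed
  have cosI: "x <#\<^bsub>G\<^esub> H = y <#\<^bsub>G\<^esub> H" if "x \<in> carrier G" "y \<in> carrier G" "subgroup H G"
      "inv\<^bsub>G\<^esub> x \<otimes>\<^bsub>G\<^esub> y \<in> H" for x y H
  proof -
    have "y = x \<otimes>\<^bsub>G\<^esub> (inv\<^bsub>G\<^esub> x \<otimes>\<^bsub>G\<^esub> y)" using that by (simp add: grpG.canc1)
    then have "y \<in> x <#\<^bsub>G\<^esub> H" using that(4) unfolding l_coset_def by blast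
    then show ?thesis by (rule grpG.l_repr_independence[OF _ that(1,3)])
  qed
  have carr: "x \<in> carrier G" if "x \<in> Gs i" for x i using that subgroup.subset[OF sub] by blast
  have FEr: "(\<lambda>\<alpha>\<in>FE. coset_incl G \<Gamma> ((\<lambda>\<alpha>\<in>FE. g \<alpha> <#\<^bsub>G\<^esub> \<Lambda>) \<alpha>)) = (\<lambda>\<alpha>\<in>FE. g \<alpha> <#\<^bsub>G\<^esub> \<Gamma>)"
    if "\<forall>\<alpha>\<in>FE. g \<alpha> \<in> carrier G" for g
    unfolding coset_incl_def using cosL that by (intro restrict_ext) simp
  show ?thesis
    unfolding bij_betw_def Gt_def[symmetric] \<Lambda>_def[symmetric]
  proof (intro conjI)
    show "inj_on (\<lambda>h. \<lambda>\<alpha>\<in>FE. coset_incl G \<Gamma> (h \<alpha>)) (poly_quot G Gt \<Lambda>)"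
    proof (rule inj_onI)
      fix h1 h2 assume h1: "h1 \<in> poly_quot G Gt \<Lambda>" and h2: "h2 \<in> poly_quot G Gt \<Lambda>"
        and eq: "(\<lambda>\<alpha>\<in>FE. coset_incl G \<Gamma> (h1 \<alpha>)) = (\<lambda>\<alpha>\<in>FE. coset_incl G \<Gamma> (h2 \<alpha>))"
      obtain g1 where g1: "poly_map G Gt g1" "h1 = (\<lambda>\<alpha>\<in>FE. g1 \<alpha> <#\<^bsub>G\<^esub> \<Lambda>)" using h1 unfolding poly_quot_def by auto
      obtain g2 where g2: "poly_map G Gt g2" "h2 = (\<lambda>\<alpha>\<in>FE. g2 \<alpha> <#\<^bsub>G\<^esub> \<Lambda>)" using h2 unfolding poly_quot_def by auto
      have v1: "\<forall>\<alpha>\<in>FE. g1 \<alpha> \<in> Gs r" and v2: "\<forall>\<alpha>\<in>FE. g2 \<alpha> \<in> Gs r" using a g1(1) g2(1) by blast+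
      have c1: "\<forall>\<alpha>\<in>FE. g1 \<alpha> \<in> carrier G" and c2: "\<forall>\<alpha>\<in>FE. g2 \<alpha> \<in> carrier G" using v1 v2 carr by blast+
      have "(\<lambda>\<alpha>\<in>FE. g1 \<alpha> <#\<^bsub>G\<^esub> \<Gamma>) = (\<lambda>\<alpha>\<in>FE. coset_incl G \<Gamma> (h1 \<alpha>))"
        unfolding g1(2) by (rule FEr[OF c1, symmetric])
      also have "\<dots> = (\<lambda>\<alpha>\<in>FE. coset_incl G \<Gamma> (h2 \<alpha>))" by (rule eq)
      also have "\<dots> = (\<lambda>\<alpha>\<in>FE. g2 \<alpha> <#\<^bsub>G\<^esub> \<Gamma>)" unfolding g2(2) by (rule FEr[OF c2])
      finally have e: "(\<lambda>\<alpha>\<in>FE. g1 \<alpha> <#\<^bsub>G\<^esub> \<Gamma>) = (\<lambda>\<alpha>\<in>FE. g2 \<alpha> <#\<^bsub>G\<^esub> \<Gamma>)" .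
      show "h1 = h2" unfolding g1(2) g2(2)
      proof (rule restrict_ext)
        fix \<alpha> assume al: "\<alpha> \<in> FE"
        have "g1 \<alpha> <#\<^bsub>G\<^esub> \<Gamma> = g2 \<alpha> <#\<^bsub>G\<^esub> \<Gamma>" using fun_cong[OF e, of \<alpha>] al by simp
        then have "inv\<^bsub>G\<^esub> g1 \<alpha> \<otimes>\<^bsub>G\<^esub> g2 \<alpha> \<in> \<Gamma>" using cosE carr v1 v2 al sG by blast
        moreover have "inv\<^bsub>G\<^esub> g1 \<alpha> \<otimes>\<^bsub>G\<^esub> g2 \<alpha> \<in> Gs r" using v1 v2 al P.Gs_mult P.Gs_inv by blast
        ultimately have "inv\<^bsub>G\<^esub> g1 \<alpha> \<otimes>\<^bsub>G\<^esub> g2 \<alpha> \<in> \<Lambda>" unfolding \<Lambda>_def by blast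
        then show "g1 \<alpha> <#\<^bsub>G\<^esub> \<Lambda> = g2 \<alpha> <#\<^bsub>G\<^esub> \<Lambda>" using cosI carr v1 v2 al sL by blast
      qed
    qed
    show "(\<lambda>h. \<lambda>\<alpha>\<in>FE. coset_incl G \<Gamma> (h \<alpha>)) ` poly_quot G Gt \<Lambda> =
        {f \<in> poly_quot G Gs \<Gamma>. \<forall>\<alpha>\<in>FE. f \<alpha> \<in> {g <#\<^bsub>G\<^esub> \<Gamma> |g. g \<in> Gs r}}"
    proof
      show "(\<lambda>h. \<lambda>\<alpha>\<in>FE. coset_incl G \<Gamma> (h \<alpha>)) ` poly_quot G Gt \<Lambda> \<subseteq>
          {f \<in> poly_quot G Gs \<Gamma>. \<forall>\<alpha>\<in>FE. f \<alpha> \<in> {g <#\<^bsub>G\<^esub> \<Gamma> |g. g \<in> Gs r}}"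
      proof
        fix f assume "f \<in> (\<lambda>h. \<lambda>\<alpha>\<in>FE. coset_incl G \<Gamma> (h \<alpha>)) ` poly_quot G Gt \<Lambda>"
        then obtain g where g: "poly_map G Gt g" "f = (\<lambda>\<alpha>\<in>FE. coset_incl G \<Gamma> ((\<lambda>\<alpha>\<in>FE. g \<alpha> <#\<^bsub>G\<^esub> \<Lambda>) \<alpha>))"
          unfolding poly_quot_def by auto
        have v: "\<forall>\<alpha>\<in>FE. g \<alpha> \<in> Gs r" using a g(1) by blast
        have f: "f = (\<lambda>\<alpha>\<in>FE. g \<alpha> <#\<^bsub>G\<^esub> \<Gamma>)" unfolding g(2) using FEr v carr by blast
        have "f \<in> poly_quot G Gs \<Gamma>" unfolding poly_quot_def f using b[OF g(1)] by blast
        moreover have "\<forall>\<alpha>\<in>FE. f \<alpha> \<in> {g <#\<^bsub>G\<^esub> \<Gamma> |g. g \<in> Gs r}" unfolding f using v by auto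
        ultimately show "f \<in> {f \<in> poly_quot G Gs \<Gamma>. \<forall>\<alpha>\<in>FE. f \<alpha> \<in> {g <#\<^bsub>G\<^esub> \<Gamma> |g. g \<in> Gs r}}" by blast
      qed
      show "{f \<in> poly_quot G Gs \<Gamma>. \<forall>\<alpha>\<in>FE. f \<alpha> \<in> {g <#\<^bsub>G\<^esub> \<Gamma> |g. g \<in> Gs r}} \<subseteq>
          (\<lambda>h. \<lambda>\<alpha>\<in>FE. coset_incl G \<Gamma> (h \<alpha>)) ` poly_quot G Gt \<Lambda>"
      proof
        fix f assume "f \<in> {f \<in> poly_quot G Gs \<Gamma>. \<forall>\<alpha>\<in>FE. f \<alpha> \<in> {g <#\<^bsub>G\<^esub> \<Gamma> |g. g \<in> Gs r}}"
        then have fq: "f \<in> poly_quot G Gs \<Gamma>" and fv: "\<forall>\<alpha>\<in>FE. f \<alpha> \<in> {g <#\<^bsub>G\<^esub> \<Gamma> |g. g \<in> Gs r}" by auto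
        obtain g where g: "poly_map G Gs g" "f = (\<lambda>\<alpha>\<in>FE. g \<alpha> <#\<^bsub>G\<^esub> \<Gamma>)" using fq unfolding poly_quot_def by auto
        have gP: "\<forall>n. Pn G Gs n 0 g" by (rule GsP[OF g(1)])
        have gc: "g \<alpha> \<in> carrier G" if "\<alpha> \<in> FE" for \<alpha> using P.P_carr gP that by blast
        have gK: "\<forall>\<alpha>\<in>FE. \<exists>x\<in>Gs r. \<exists>c\<in>\<Gamma>. g \<alpha> = x \<otimes>\<^bsub>G\<^esub> c"
        proof
          fix \<alpha> assume al: "\<alpha> \<in> FE"
          obtain x where x: "x \<in> Gs r" "f \<alpha> = x <#\<^bsub>G\<^esub> \<Gamma>" using fv al by blast
          have "x <#\<^bsub>G\<^esub> \<Gamma> = g \<alpha> <#\<^bsub>G\<^esub> \<Gamma>" using x(2) g(2) al by simp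
          then have "inv\<^bsub>G\<^esub> x \<otimes>\<^bsub>G\<^esub> g \<alpha> \<in> \<Gamma>" using cosE carr x(1) gc al sG by blast
          moreover have "g \<alpha> = x \<otimes>\<^bsub>G\<^esub> (inv\<^bsub>G\<^esub> x \<otimes>\<^bsub>G\<^esub> g \<alpha>)" using carr[OF x(1)] gc al by (simp add: grpG.canc1)
          ultimately show "\<exists>x\<in>Gs r. \<exists>c\<in>\<Gamma>. g \<alpha> = x \<otimes>\<^bsub>G\<^esub> c" using x(1) by blast
        qed
        obtain \<gamma> where \<gamma>: "\<forall>\<alpha>\<in>FE. \<gamma> \<alpha> \<in> \<Gamma>" "\<forall>n. Pn G Gs n 0 \<gamma>" "\<forall>\<alpha>\<in>FE. g \<alpha> \<otimes>\<^bsub>G\<^esub> \<gamma> \<alpha> \<in> Gs r"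
          using P.KL[OF gP gK] by blast
        define g' where "g' = mulf G g \<gamma>"
        have g'P: "\<forall>n. Pn G Gs n 0 g'" unfolding g'_def using gP \<gamma>(2) P.P_mul by blast
        have g'v: "\<forall>\<alpha>\<in>FE. g' \<alpha> \<in> Gs r" unfolding g'_def mulf_def using \<gamma>(3) by blast
        have g'poly: "poly_map G Gt g'" by (rule c[OF g'P g'v])
        define h where "h = (\<lambda>\<alpha>\<in>FE. g' \<alpha> <#\<^bsub>G\<^esub> \<Lambda>)"
        have hA: "h \<in> poly_quot G Gt \<Lambda>" unfolding poly_quot_def h_def using g'poly by blast
        have "(\<lambda>\<alpha>\<in>FE. coset_incl G \<Gamma> (h \<alpha>)) = (\<lambda>\<alpha>\<in>FE. g' \<alpha> <#\<^bsub>G\<^esub> \<Gamma>)"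
          unfolding h_def using FEr g'v carr by blast
        also have "\<dots> = f" unfolding g(2)
        proof (rule restrict_ext)
          fix \<alpha> assume al: "\<alpha> \<in> FE"
          have c1: "\<gamma> \<alpha> \<in> carrier G" using \<gamma>(1) al subgroup.subset[OF sG] by blast
          have "g' \<alpha> \<in> g \<alpha> <#\<^bsub>G\<^esub> \<Gamma>" unfolding g'_def mulf_def l_coset_def using \<gamma>(1) al by blast
          then show "g' \<alpha> <#\<^bsub>G\<^esub> \<Gamma> = g \<alpha> <#\<^bsub>G\<^esub> \<Gamma>"
            using grpG.l_repr_independence[OF _ gc[OF al] sG] by simp
        qed
        finally show "f \<in> (\<lambda>h. \<lambda>\<alpha>\<in>FE. coset_incl G \<Gamma> (h \<alpha>)) ` poly_quot G Gt \<Lambda>" using hA by blast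
      qed
    qed
  qed
qed

end
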